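(* Let $q\ge2$ and $s\ge2$ be integers. There exists a constant $\lambda>0$ (depending only on $q,s$) such that for every $\eta>0$ there is a constant $C_\eta>0$ with the following property: for every $q$-multiplicative sequence $f\colon\mathbb{N}_0\to\mathbb{U}$ and all integers $N,M\ge1$ with $\eta M<N\le M/\eta$, $$\|f\|_{U^s[N]}\le C_\eta\,\|f\|_{U^s[M]}^{\lambda}.$$
   Context: $\mathbb{N}_0=\{0,1,2,\dots\}$, $\mathbb{U}=\{z\in\mathbb{C}:|z|=1\}$. A sequence $f\colon\mathbb{N}_0\to\mathbb{U}$ is $q$-multiplicative if for all integers $t,m,n\ge 0$ with $m<q^t$ and $q^t\mid n$ one has $f(m+n)=f(m)f(n)$. For $N\ge1$ let $[N]=\{0,\dots,N-1\}$ and let $\Pi(N)$ be the set of $\vec n=(n_0,\dots,n_s)\in\mathbb{Z}^{s+1}$ with $n_0+\omega_1n_1+\dots+\omega_sn_s\in[N]$ for all $\omega\in\{0,1\}^s$. The Gowers norm is defined by $\|f\|_{U^s[N]}^{2^s}=\frac{1}{|\Pi(N)|}\sum_{\vec n\in\Pi(N)}\prod_{\omega\in\{0,1\}^s}\mathcal{C}^{|\omega|}f(n_0+\omega_1n_1+\dots+\omega_sn_s)$, $\|f\|_{U^s[N]}\ge0$, where $\mathcal{C}$ is complex conjugation and $|\omega|=\sum_i\omega_i$. *)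

theory Defs
  imports Complex_Main "HOL-Library.FuncSet"
begin

text \<open>q-multiplicative sequences (values in the unit circle are required separately).\<close>
definition q_multiplicative :: "nat \<Rightarrow> (nat \<Rightarrow> complex) \<Rightarrow> bool" where
  "q_multiplicative q f \<longleftrightarrow>
     (\<forall>t m n. m < q ^ t \<and> q ^ t dvd n \<longrightarrow> f (m + n) = f m * f n)"

text \<open>Vectors (n_0,...,n_s) are functions on {0..s}; omega in {0,1}^s is encoded by
  the subset S of {1..s} where omega_i = 1, so |omega| = card S.\<close>
definition gowers_Pi :: "nat \<Rightarrow> nat \<Rightarrow> (nat \<Rightarrow> int) set" where
  "gowers_Pi s N = {n \<in> {0..s} \<rightarrow>\<^sub>E (UNIV :: int set).
       \<forall>S \<subseteq> {1..s}. n 0 + (\<Sum>i\<in>S. n i) \<in> {0..<int N}}"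

definition conj_pow :: "nat \<Rightarrow> complex \<Rightarrow> complex" where
  "conj_pow k z = (if even k then z else cnj z)"

definition gowers_pow :: "nat \<Rightarrow> nat \<Rightarrow> (nat \<Rightarrow> complex) \<Rightarrow> complex" where
  "gowers_pow s N f =
     (1 / of_nat (card (gowers_Pi s N))) *
     (\<Sum>n\<in>gowers_Pi s N. \<Prod>S\<in>Pow {1..s}. conj_pow (card S) (f (nat (n 0 + (\<Sum>i\<in>S. n i)))))"

text \<open>The Gowers norm: the nonnegative 2^s-th root of the (real, nonnegative) average.\<close>
definition gowers_norm :: "nat \<Rightarrow> nat \<Rightarrow> (nat \<Rightarrow> complex) \<Rightarrow> real" where
  "gowers_norm s N f = root (2 ^ s) (cmod (gowers_pow s N f))"

end

theory Submission
  imports Defs "HOL-Analysis.Analysis"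
begin


definition gbox :: "nat \<Rightarrow> int \<Rightarrow> (nat \<Rightarrow> int) set" where
  "gbox s R = PiE {0..s} (\<lambda>i. if i = 0 then {0..<R} else {-R<..<R})"

definition pt :: "(nat \<Rightarrow> int) \<Rightarrow> nat set \<Rightarrow> int" where
  "pt n S = n 0 + (\<Sum>i\<in>S. n i)"

definition T :: "nat \<Rightarrow> int \<Rightarrow> (nat set \<Rightarrow> int \<Rightarrow> complex) \<Rightarrow> complex" where
  "T s R g = (\<Sum>n\<in>gbox s R. \<Prod>S\<in>Pow {1..s}. conj_pow (card S) (g S (pt n S)))"

lemma finite_gbox[simp]: "finite (gbox s R)"
  unfolding gbox_def by (intro finite_PiE) auto

lemma conj_pow_zero[simp]: "conj_pow 0 a = a"
  by (simp add: conj_pow_def)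
lemma conj_pow_mult: "conj_pow k (a * b) = conj_pow k a * conj_pow k b"
  by (simp add: conj_pow_def)
lemma conj_pow_Suc: "conj_pow (Suc k) a = cnj (conj_pow k a)"
  by (simp add: conj_pow_def)
lemma conj_pow_cnj: "conj_pow k (cnj a) = cnj (conj_pow k a)"
  by (simp add: conj_pow_def)
lemma conj_pow_add: "conj_pow k (a + b) = conj_pow k a + conj_pow k b"
  by (simp add: conj_pow_def)
lemma conj_pow_0[simp]: "conj_pow k 0 = 0"
  by (simp add: conj_pow_def)
lemma cmod_conj_pow[simp]: "cmod (conj_pow k a) = cmod a"
  by (simp add: conj_pow_def)
lemma conj_pow_sum: "conj_pow k (sum f A) = (\<Sum>x\<in>A. conj_pow k (f x))"
  by (simp add: conj_pow_def)

lemma gbox_Suc: "gbox (Suc s) R = (\<lambda>(n,t). n(Suc s := t)) ` (gbox s R \<times> {-R<..<R})"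
proof -
  have "gbox (Suc s) R = (\<lambda>(y, g). g(Suc s := y)) ` ({-R<..<R} \<times> gbox s R)"
    unfolding gbox_def by (simp add: atLeastAtMostSuc_conv PiE_insert_eq)
  also have "\<dots> = (\<lambda>(n,t). n(Suc s := t)) ` (gbox s R \<times> {-R<..<R})"
    by force
  finally show ?thesis .
qed

lemma gbox_Suc_inj: "inj_on (\<lambda>(n,t). n(Suc s := t)) (gbox s R \<times> {-R<..<R})"
proof -
  have "inj_on (\<lambda>(y, g). g(Suc s := y)) ({-R<..<R} \<times> gbox s R)"
    unfolding gbox_def using inj_combinator[of "Suc s" "{0..s}" "\<lambda>i. if i = 0 then {0..<R} else {-R<..<R}"] by simp
  then show ?thesis unfolding inj_on_def by auto
qed

lemma pt_upd: "Suc s \<notin> S \<Longrightarrow> pt (n(Suc s := t)) S = pt n S"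
  unfolding pt_def by (auto intro!: sum.cong)

lemma pt_upd_ins: "S \<subseteq> {1..s} \<Longrightarrow> pt (n(Suc s := t)) (insert (Suc s) S) = pt n S + t"
proof -
  assume S: "S \<subseteq> {1..s}"
  have fin: "finite S" using S finite_subset by blast
  have ns: "Suc s \<notin> S" using S by auto
  have "pt (n(Suc s := t)) (insert (Suc s) S) = n 0 + (t + (\<Sum>i\<in>S. (n(Suc s := t)) i))"
    unfolding pt_def using fin ns by simp
  also have "(\<Sum>i\<in>S. (n(Suc s := t)) i) = (\<Sum>i\<in>S. n i)"
    using ns by (auto intro!: sum.cong)
  finally show ?thesis unfolding pt_def by simp
qed

lemma Pow_Suc: "Pow {1..Suc s} = Pow {1..s} \<union> insert (Suc s) ` Pow {1..s}"
  by (simp add: atLeastAtMostSuc_conv Pow_insert)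

lemma prod_Pow_Suc:
  "(\<Prod>S\<in>Pow {1..Suc s}. F S) = (\<Prod>S\<in>Pow {1..s}. F S * F (insert (Suc s) S))"
proof -
  have disj: "Pow {1..s} \<inter> insert (Suc s) ` Pow {1..s} = {}" by auto
  have inj: "inj_on (insert (Suc s)) (Pow {1..s})"
    unfolding inj_on_def by (metis Pow_iff atLeastAtMost_iff insert_ident not_less_eq_eq order_refl subset_iff)
  have "(\<Prod>S\<in>Pow {1..Suc s}. F S) = (\<Prod>S\<in>Pow {1..s}. F S) * (\<Prod>S\<in>insert (Suc s) ` Pow {1..s}. F S)"
    unfolding Pow_Suc by (rule prod.union_disjoint) (use disj in auto)
  also have "(\<Prod>S\<in>insert (Suc s) ` Pow {1..s}. F S) = (\<Prod>S\<in>Pow {1..s}. F (insert (Suc s) S))"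
    by (rule prod.reindex[OF inj, unfolded comp_def])
  finally show ?thesis by (simp add: prod.distrib)
qed

lemma card_ins: "S \<in> Pow {1..s} \<Longrightarrow> card (insert (Suc s) S) = Suc (card S)"
  using finite_subset[of S "{1..s}"] by (subst card_insert_disjoint) auto

lemma T_Suc: "T (Suc s) R g = (\<Sum>n\<in>gbox s R. \<Sum>t\<in>{-R<..<R}. \<Prod>S\<in>Pow {1..s}.
     conj_pow (card S) (g S (pt n S) * cnj (g (insert (Suc s) S) (pt n S + t))))"
proof -
  have "T (Suc s) R g = (\<Sum>x\<in>gbox s R \<times> {-R<..<R}. (\<lambda>m. \<Prod>S\<in>Pow {1..Suc s}. conj_pow (card S) (g S (pt m S))) ((\<lambda>(n,t). n(Suc s := t)) x))"
    unfolding T_def gbox_Suc by (rule sum.reindex[OF gbox_Suc_inj, unfolded comp_def])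
  also have "\<dots> = (\<Sum>n\<in>gbox s R. \<Sum>t\<in>{-R<..<R}. \<Prod>S\<in>Pow {1..Suc s}. conj_pow (card S) (g S (pt (n(Suc s := t)) S)))"
    unfolding sum.cartesian_product by (intro sum.cong) auto
  also have "\<dots> = (\<Sum>n\<in>gbox s R. \<Sum>t\<in>{-R<..<R}. \<Prod>S\<in>Pow {1..s}.
     conj_pow (card S) (g S (pt n S) * cnj (g (insert (Suc s) S) (pt n S + t))))"
  proof (intro sum.cong refl)
    fix n t
    show "(\<Prod>S\<in>Pow {1..Suc s}. conj_pow (card S) (g S (pt (n(Suc s := t)) S))) =
      (\<Prod>S\<in>Pow {1..s}. conj_pow (card S) (g S (pt n S) * cnj (g (insert (Suc s) S) (pt n S + t))))"
      unfolding prod_Pow_Suc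
    proof (intro prod.cong refl)
      fix S assume S: "S \<in> Pow {1..s}"
      then have ns: "Suc s \<notin> S" by auto
      show "conj_pow (card S) (g S (pt (n(Suc s := t)) S)) *
        conj_pow (card (insert (Suc s) S)) (g (insert (Suc s) S) (pt (n(Suc s := t)) (insert (Suc s) S))) =
        conj_pow (card S) (g S (pt n S) * cnj (g (insert (Suc s) S) (pt n S + t)))"
        using S ns by (simp add: pt_upd pt_upd_ins card_ins conj_pow_mult conj_pow_Suc conj_pow_cnj)
    qed
  qed
  finally show ?thesis .
qed

lemma T_rec: "T (Suc s) R g = (\<Sum>t\<in>{-R<..<R}. T s R (\<lambda>S y. g S y * cnj (g (insert (Suc s) S) (y + t))))"
  unfolding T_Suc by (subst sum.swap) (simp add: T_def)

lemma T_cong: "(\<And>S. S \<in> Pow {1..s} \<Longrightarrow> g S = g' S) \<Longrightarrow> T s R g = T s R g'"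
  unfolding T_def by (intro sum.cong prod.cong refl) auto

definition supp_in :: "int \<Rightarrow> (int \<Rightarrow> complex) \<Rightarrow> bool" where
  "supp_in R w \<longleftrightarrow> (\<forall>y. w y \<noteq> 0 \<longrightarrow> 0 \<le> y \<and> y < R)"

lemma sum_shift_int:
  fixes G :: "int \<Rightarrow> 'a::comm_monoid_add"
  assumes "finite A" "finite B" "\<And>y. G y \<noteq> 0 \<Longrightarrow> (y - a \<in> A \<longleftrightarrow> y \<in> B)"
  shows "(\<Sum>x\<in>A. G (x + a)) = (\<Sum>y\<in>B. G y)"
proof -
  have "(\<Sum>x\<in>A. G (x + a)) = (\<Sum>y\<in>(\<lambda>x. x + a) ` A. G y)"
    by (subst sum.reindex) (auto simp: inj_on_def)
  also have "\<dots> = (\<Sum>y\<in>(\<lambda>x. x + a) ` A \<inter> B. G y)"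
  proof (rule sum.mono_neutral_right)
    show "\<forall>i\<in>(\<lambda>x. x + a) ` A - (\<lambda>x. x + a) ` A \<inter> B. G i = 0"
    proof
      fix y assume y: "y \<in> (\<lambda>x. x + a) ` A - (\<lambda>x. x + a) ` A \<inter> B"
      then have "y - a \<in> A" "y \<notin> B" by auto
      then show "G y = 0" using assms(3) by blast
    qed
  qed (use assms in auto)
  also have "\<dots> = (\<Sum>y\<in>B. G y)"
  proof (rule sum.mono_neutral_left)
    show "\<forall>i\<in>B - (\<lambda>x. x + a) ` A \<inter> B. G i = 0"
    proof
      fix y assume y: "y \<in> B - (\<lambda>x. x + a) ` A \<inter> B"
      then have "y - a \<notin> A" "y \<in> B" by (auto simp: image_iff)
      then show "G y = 0" using assms(3) by blast
    qed
  qed (use assms in auto)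
  finally show ?thesis .
qed

lemma prod_nz: "finite A \<Longrightarrow> a \<in> A \<Longrightarrow> prod f A \<noteq> (0::complex) \<Longrightarrow> f a \<noteq> 0"
  by (auto simp: prod_zero_iff)

definition hbox :: "nat \<Rightarrow> int \<Rightarrow> (nat \<Rightarrow> int) set" where
  "hbox s R = PiE {1..s} (\<lambda>_. {-R<..<R})"

lemma finite_hbox[simp]: "finite (hbox s R)"
  unfolding hbox_def by (intro finite_PiE) auto

lemma hbox_alt: "PiE {1..s} (\<lambda>i. if i = 0 then {0..<R} else {-R<..<R}) = hbox s R"
  unfolding hbox_def by (rule PiE_cong) auto

lemma gbox_split: "gbox s R = (\<lambda>(x,h). h(0 := x)) ` ({0..<R} \<times> hbox s R)"
proof -
  have e: "{0..s} = insert 0 {1..s}" by auto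
  show ?thesis unfolding gbox_def e PiE_insert_eq hbox_alt by simp
qed

lemma gbox_split_inj: "inj_on (\<lambda>(x,h). h(0 := x)) ({0..<R} \<times> hbox s R)"
  using inj_combinator[of 0 "{1..s}" "\<lambda>i. if i = 0 then {0..<R} else {-R<..<R}"]
  unfolding hbox_alt by simp

lemma sum_gbox: "(\<Sum>n\<in>gbox s R. F n) = (\<Sum>h\<in>hbox s R. \<Sum>x\<in>{0..<R}. F (h(0 := x)))"
proof -
  have "(\<Sum>n\<in>gbox s R. F n) = (\<Sum>p\<in>{0..<R} \<times> hbox s R. F ((\<lambda>(x,h). h(0 := x)) p))"
    unfolding gbox_split by (rule sum.reindex[OF gbox_split_inj, unfolded comp_def])
  also have "\<dots> = (\<Sum>x\<in>{0..<R}. \<Sum>h\<in>hbox s R. F (h(0 := x)))"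
    unfolding sum.cartesian_product by (intro sum.cong) auto
  finally show ?thesis by (subst sum.swap) simp
qed

lemma pt_upd0: "S \<subseteq> {1..s} \<Longrightarrow> pt (h(0 := x)) S = x + (\<Sum>i\<in>S. h i)"
  unfolding pt_def by (auto intro!: sum.cong)

definition Aval :: "nat \<Rightarrow> int \<Rightarrow> (int \<Rightarrow> complex) \<Rightarrow> (nat \<Rightarrow> int) \<Rightarrow> complex" where
  "Aval s R u h = (\<Sum>x\<in>{0..<R}. \<Prod>S\<in>Pow {1..s}. conj_pow (card S) (u (x + (\<Sum>i\<in>S. h i))))"

lemma prod_cnj: "(\<Prod>x\<in>A. cnj (f x)) = cnj (\<Prod>x\<in>A. f x)"
  by (induction A rule: infinite_finite_induct) auto

lemma sum_cnj: "(\<Sum>x\<in>A. cnj (f x)) = cnj (\<Sum>x\<in>A. f x)"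
  by (induction A rule: infinite_finite_induct) auto

lemma T_bil:
  assumes "supp_in R v"
  shows "T (Suc s) R (\<lambda>S. if Suc s \<in> S then v else u) = (\<Sum>h\<in>hbox s R. Aval s R u h * cnj (Aval s R v h))"
proof -
  define G where "G h y = (\<Prod>S\<in>Pow {1..s}. conj_pow (card S) (v (y + (\<Sum>i\<in>S. h i))))" for h y
  have Gsupp: "G h y \<noteq> 0 \<Longrightarrow> 0 \<le> y \<and> y < R" for h y
  proof -
    assume "G h y \<noteq> 0"
    then have "conj_pow (card {}) (v (y + (\<Sum>i\<in>{}. h i))) \<noteq> 0"
      unfolding G_def using prod_nz[of "Pow {1..s}" "{}" "\<lambda>S. conj_pow (card S) (v (y + (\<Sum>i\<in>S. h i)))"] by auto
    then have "v y \<noteq> 0" by simp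
    then show ?thesis using assms unfolding supp_in_def by auto
  qed
  have "T (Suc s) R (\<lambda>S. if Suc s \<in> S then v else u) =
     (\<Sum>n\<in>gbox s R. \<Sum>t\<in>{-R<..<R}. \<Prod>S\<in>Pow {1..s}.
       conj_pow (card S) (u (pt n S) * cnj (v (pt n S + t))))"
    unfolding T_Suc by (intro sum.cong prod.cong refl) auto
  also have "\<dots> = (\<Sum>h\<in>hbox s R. \<Sum>x\<in>{0..<R}. \<Sum>t\<in>{-R<..<R}. \<Prod>S\<in>Pow {1..s}.
       conj_pow (card S) (u (x + (\<Sum>i\<in>S. h i)) * cnj (v (x + (\<Sum>i\<in>S. h i) + t))))"
    unfolding sum_gbox by (intro sum.cong prod.cong refl) (auto simp: pt_upd0)
  also have "\<dots> = (\<Sum>h\<in>hbox s R. \<Sum>x\<in>{0..<R}. (\<Prod>S\<in>Pow {1..s}. conj_pow (card S) (u (x + (\<Sum>i\<in>S. h i))))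
       * cnj (\<Sum>t\<in>{-R<..<R}. G h (t + x)))"
  proof (intro sum.cong refl)
    fix h x
    have "(\<Sum>t\<in>{-R<..<R}. \<Prod>S\<in>Pow {1..s}. conj_pow (card S) (u (x + (\<Sum>i\<in>S. h i)) * cnj (v (x + (\<Sum>i\<in>S. h i) + t))))
       = (\<Sum>t\<in>{-R<..<R}. (\<Prod>S\<in>Pow {1..s}. conj_pow (card S) (u (x + (\<Sum>i\<in>S. h i)))) * cnj (G h (t + x)))"
    proof (intro sum.cong refl)
      fix t
      have "(\<Prod>S\<in>Pow {1..s}. conj_pow (card S) (u (x + (\<Sum>i\<in>S. h i)) * cnj (v (x + (\<Sum>i\<in>S. h i) + t))))
         = (\<Prod>S\<in>Pow {1..s}. conj_pow (card S) (u (x + (\<Sum>i\<in>S. h i)))) * (\<Prod>S\<in>Pow {1..s}. cnj (conj_pow (card S) (v (t + x + (\<Sum>i\<in>S. h i)))))"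
        by (simp only: conj_pow_mult conj_pow_cnj prod.distrib ac_simps)
      also have "\<dots> = (\<Prod>S\<in>Pow {1..s}. conj_pow (card S) (u (x + (\<Sum>i\<in>S. h i)))) * cnj (G h (t + x))"
        unfolding G_def prod_cnj ..
      finally show "(\<Prod>S\<in>Pow {1..s}. conj_pow (card S) (u (x + (\<Sum>i\<in>S. h i)) * cnj (v (x + (\<Sum>i\<in>S. h i) + t))))
         = (\<Prod>S\<in>Pow {1..s}. conj_pow (card S) (u (x + (\<Sum>i\<in>S. h i)))) * cnj (G h (t + x))" .
    qed
    also have "\<dots> = (\<Prod>S\<in>Pow {1..s}. conj_pow (card S) (u (x + (\<Sum>i\<in>S. h i)))) * cnj (\<Sum>t\<in>{-R<..<R}. G h (t + x))"
      by (simp only: sum_distrib_left flip: sum_cnj)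
    finally show "(\<Sum>t\<in>{-R<..<R}. \<Prod>S\<in>Pow {1..s}. conj_pow (card S) (u (x + (\<Sum>i\<in>S. h i)) * cnj (v (x + (\<Sum>i\<in>S. h i) + t))))
       = (\<Prod>S\<in>Pow {1..s}. conj_pow (card S) (u (x + (\<Sum>i\<in>S. h i)))) * cnj (\<Sum>t\<in>{-R<..<R}. G h (t + x))" .
  qed
  also have "\<dots> = (\<Sum>h\<in>hbox s R. \<Sum>x\<in>{0..<R}. (\<Prod>S\<in>Pow {1..s}. conj_pow (card S) (u (x + (\<Sum>i\<in>S. h i))))
       * cnj (\<Sum>y\<in>{0..<R}. G h y))"
  proof (intro sum.cong refl)
    fix h x assume "x \<in> {0..<R}"
    then have "(\<Sum>t\<in>{-R<..<R}. G h (t + x)) = (\<Sum>y\<in>{0..<R}. G h y)"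
      by (intro sum_shift_int) (auto dest: Gsupp)
    then show "(\<Prod>S\<in>Pow {1..s}. conj_pow (card S) (u (x + (\<Sum>i\<in>S. h i)))) * cnj (\<Sum>t\<in>{-R<..<R}. G h (t + x)) =
      (\<Prod>S\<in>Pow {1..s}. conj_pow (card S) (u (x + (\<Sum>i\<in>S. h i)))) * cnj (\<Sum>y\<in>{0..<R}. G h y)" by simp
  qed
  also have "\<dots> = (\<Sum>h\<in>hbox s R. Aval s R u h * cnj (Aval s R v h))"
    unfolding Aval_def G_def by (simp add: sum_distrib_right)
  finally show ?thesis .
qed


definition U :: "nat \<Rightarrow> int \<Rightarrow> (int \<Rightarrow> complex) \<Rightarrow> complex" where
  "U s R w = T s R (\<lambda>_. w)"

lemma U_Suc:
  assumes "supp_in R u"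
  shows "U (Suc s) R u = of_real (\<Sum>h\<in>hbox s R. (cmod (Aval s R u h))\<^sup>2)"
proof -
  have "U (Suc s) R u = T (Suc s) R (\<lambda>S. if Suc s \<in> S then u else u)" unfolding U_def by simp
  also have "\<dots> = (\<Sum>h\<in>hbox s R. Aval s R u h * cnj (Aval s R u h))" by (rule T_bil[OF assms])
  also have "\<dots> = of_real (\<Sum>h\<in>hbox s R. (cmod (Aval s R u h))\<^sup>2)"
    by (simp only: of_real_sum complex_norm_square)
  finally show ?thesis .
qed

lemma cmod_U_Suc:
  assumes "supp_in R u"
  shows "cmod (U (Suc s) R u) = (\<Sum>h\<in>hbox s R. (cmod (Aval s R u h))\<^sup>2)"
proof -
  define r where "r = (\<Sum>h\<in>hbox s R. (cmod (Aval s R u h))\<^sup>2)"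
  have r: "r \<ge> 0" unfolding r_def by (simp add: sum_nonneg)
  have e: "U (Suc s) R u = of_real r" unfolding r_def by (rule U_Suc[OF assms])
  have "cmod (U (Suc s) R u) = r" unfolding e using r by simp
  then show ?thesis unfolding r_def .
qed

lemma U_Suc_real:
  assumes "supp_in R u"
  shows "U (Suc s) R u = of_real (cmod (U (Suc s) R u))"
  unfolding cmod_U_Suc[OF assms] by (rule U_Suc[OF assms])

lemma CS_sqrt:
  fixes a b :: "'a \<Rightarrow> real"
  shows "(\<Sum>i\<in>I. a i * b i) \<le> sqrt (\<Sum>i\<in>I. (a i)\<^sup>2) * sqrt (\<Sum>i\<in>I. (b i)\<^sup>2)"
proof -
  have "(\<Sum>i\<in>I. a i * b i)\<^sup>2 \<le> (\<Sum>i\<in>I. (a i)\<^sup>2) * (\<Sum>i\<in>I. (b i)\<^sup>2)"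
    by (rule Cauchy_Schwarz_ineq_sum)
  then have "sqrt ((\<Sum>i\<in>I. a i * b i)\<^sup>2) \<le> sqrt ((\<Sum>i\<in>I. (a i)\<^sup>2) * (\<Sum>i\<in>I. (b i)\<^sup>2))"
    by (rule real_sqrt_le_mono)
  then show ?thesis by (simp add: real_sqrt_mult)
qed

lemma T_CS:
  assumes "supp_in R u" "supp_in R v"
  shows "cmod (T (Suc s) R (\<lambda>S. if Suc s \<in> S then v else u)) \<le> sqrt (cmod (U (Suc s) R u)) * sqrt (cmod (U (Suc s) R v))"
proof -
  have "cmod (T (Suc s) R (\<lambda>S. if Suc s \<in> S then v else u)) = cmod (\<Sum>h\<in>hbox s R. Aval s R u h * cnj (Aval s R v h))"
    by (simp add: T_bil[OF assms(2)])
  also have "\<dots> \<le> (\<Sum>h\<in>hbox s R. cmod (Aval s R u h) * cmod (Aval s R v h))"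
    by (rule order_trans[OF norm_sum]) (simp add: norm_mult)
  also have "\<dots> \<le> sqrt (\<Sum>h\<in>hbox s R. (cmod (Aval s R u h))\<^sup>2) * sqrt (\<Sum>h\<in>hbox s R. (cmod (Aval s R v h))\<^sup>2)"
    by (rule CS_sqrt)
  also have "\<dots> = sqrt (cmod (U (Suc s) R u)) * sqrt (cmod (U (Suc s) R v))"
    by (simp add: cmod_U_Suc assms)
  finally show ?thesis .
qed


lemma holder:
  fixes a :: "'i \<Rightarrow> 't \<Rightarrow> real"
  assumes I: "finite I" "I \<noteq> {}" and J: "finite J" and nn: "\<And>i t. a i t \<ge> 0"
  shows "(\<Sum>t\<in>J. (\<Prod>i\<in>I. a i t) powr (1 / card I)) \<le> (\<Prod>i\<in>I. (\<Sum>t\<in>J. a i t) powr (1 / card I))"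
proof (cases "\<exists>i\<in>I. (\<Sum>t\<in>J. a i t) = 0")
  case True
  then obtain i0 where i0: "i0 \<in> I" "(\<Sum>t\<in>J. a i0 t) = 0" by blast
  then have z: "\<forall>t\<in>J. a i0 t = 0" using sum_nonneg_eq_0_iff[OF J] nn by blast
  have "(\<Sum>t\<in>J. (\<Prod>i\<in>I. a i t) powr (1 / card I)) = 0"
  proof (intro sum.neutral ballI)
    fix t assume "t \<in> J"
    then have "(\<Prod>i\<in>I. a i t) = 0" using z i0 I by (auto intro!: prod_zero)
    then show "(\<Prod>i\<in>I. a i t) powr (1 / card I) = 0" by simp
  qed
  then show ?thesis by (simp add: prod_nonneg)
next
  case False
  define A where "A i = (\<Sum>t\<in>J. a i t)" for i
  have Apos: "A i > 0" if "i \<in> I" for i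
    using False that nn unfolding A_def by (metis less_eq_real_def sum_nonneg)
  define m where "m = real (card I)"
  have m: "m > 0" using I unfolding m_def by (simp add: card_gt_0_iff)
  have key: "(\<Prod>i\<in>I. a i t) powr (1 / card I) \<le> (\<Prod>i\<in>I. A i) powr (1 / card I) * (\<Sum>i\<in>I. (a i t / A i) / card I)" for t
  proof -
    have "(\<Prod>i\<in>I. a i t) = (\<Prod>i\<in>I. A i) * (\<Prod>i\<in>I. a i t / A i)"
      by (simp add: prod.distrib[symmetric]) (intro prod.cong refl, use Apos in force)
    then have "(\<Prod>i\<in>I. a i t) powr (1 / card I) = (\<Prod>i\<in>I. A i) powr (1 / card I) * (\<Prod>i\<in>I. a i t / A i) powr (1 / card I)"
      by (simp add: powr_mult)
    also have "\<dots> \<le> (\<Prod>i\<in>I. A i) powr (1 / card I) * (\<Sum>i\<in>I. (a i t / A i) / card I)"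
      by (intro mult_left_mono arith_geom_mean I) (use nn Apos in \<open>auto intro: divide_nonneg_pos\<close>)
    finally show ?thesis .
  qed
  have "(\<Sum>t\<in>J. (\<Prod>i\<in>I. a i t) powr (1 / card I)) \<le> (\<Sum>t\<in>J. (\<Prod>i\<in>I. A i) powr (1 / card I) * (\<Sum>i\<in>I. (a i t / A i) / card I))"
    by (intro sum_mono key)
  also have "\<dots> = (\<Prod>i\<in>I. A i) powr (1 / card I) * (\<Sum>t\<in>J. \<Sum>i\<in>I. (a i t / A i) / card I)"
    by (simp add: sum_distrib_left)
  also have "(\<Sum>t\<in>J. \<Sum>i\<in>I. (a i t / A i) / card I) = (\<Sum>i\<in>I. (\<Sum>t\<in>J. a i t) / A i / card I)"
    by (subst sum.swap) (simp add: sum_divide_distrib)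
  also have "(\<Sum>i\<in>I. (\<Sum>t\<in>J. a i t) / A i / card I) = 1"
  proof -
    have "(\<Sum>i\<in>I. (\<Sum>t\<in>J. a i t) / A i / card I) = (\<Sum>i\<in>I. 1 / card I)"
    proof (intro sum.cong refl)
      fix i assume "i \<in> I"
      then have "A i > 0" by (rule Apos)
      then show "(\<Sum>t\<in>J. a i t) / A i / card I = 1 / card I" unfolding A_def by simp
    qed
    then show ?thesis using I by (simp add: card_gt_0_iff)
  qed
  finally show ?thesis by (simp add: prod_powr_distrib A_def)
qed


definition nrm :: "nat \<Rightarrow> int \<Rightarrow> (int \<Rightarrow> complex) \<Rightarrow> real" where
  "nrm s R w = (cmod (U s R w)) powr (1 / 2^s)"

lemma U_rec_sum:
  "T (Suc s) R (\<lambda>S. if Suc s \<in> S then v else u) = (\<Sum>t\<in>{-R<..<R}. U s R (\<lambda>y. u y * cnj (v (y+t))))"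
  unfolding T_rec U_def by (intro sum.cong refl T_cong) auto

lemma sum_cmod_real:
  assumes "\<And>t. t \<in> J \<Longrightarrow> z t = of_real (cmod (z t))"
  shows "(\<Sum>t\<in>J. cmod (z t)) = cmod (\<Sum>t\<in>J. z t)"
proof -
  have e: "(\<Sum>t\<in>J. z t) = of_real (\<Sum>t\<in>J. cmod (z t))"
    by (simp only: of_real_sum) (rule sum.cong, use assms in auto)
  have "cmod (\<Sum>t\<in>J. z t) = (\<Sum>t\<in>J. cmod (z t))"
    by (simp only: e norm_of_real) (simp add: sum_nonneg)
  then show ?thesis by simp
qed

lemma sqrt_powr: "0 \<le> a \<Longrightarrow> (sqrt a) powr (1 / 2^n) = a powr (1 / 2^(Suc n))"
  by (simp add: powr_half_sqrt[symmetric] powr_powr)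

lemma supp_w: "supp_in R u \<Longrightarrow> supp_in R (\<lambda>y. u y * cnj (v (y + t)))"
  unfolding supp_in_def by auto

lemma GCS:
  assumes "\<forall>S. supp_in R (g S)"
  shows "cmod (T (Suc s) R g) \<le> (\<Prod>S\<in>Pow {1..Suc s}. nrm (Suc s) R (g S))"
  using assms
proof (induction s arbitrary: g)
  case 0
  have e: "T (Suc 0) R g = T (Suc 0) R (\<lambda>S. if Suc 0 \<in> S then g {Suc 0} else g {})"
  proof (rule T_cong)
    fix S assume "S \<in> Pow {1..Suc 0}"
    then have "S = {} \<or> S = {Suc 0}" by auto
    then show "g S = (if Suc 0 \<in> S then g {Suc 0} else g {})" by auto
  qed
  have "cmod (T (Suc 0) R g) \<le> sqrt (cmod (U (Suc 0) R (g {}))) * sqrt (cmod (U (Suc 0) R (g {Suc 0})))"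
    unfolding e by (rule T_CS) (use 0 in auto)
  also have "\<dots> = (\<Prod>S\<in>Pow {1..Suc 0}. nrm (Suc 0) R (g S))"
    unfolding prod_Pow_Suc by (simp add: nrm_def powr_half_sqrt)
  finally show ?case .
next
  case (Suc s)
  define w where "w t S = (\<lambda>y. g S y * cnj (g (insert (Suc (Suc s)) S) (y + t)))" for t S
  have wsupp: "\<forall>S. supp_in R (w t S)" for t using Suc.prems unfolding w_def by (auto intro: supp_w)
  have "cmod (T (Suc (Suc s)) R g) = cmod (\<Sum>t\<in>{-R<..<R}. T (Suc s) R (w t))"
    unfolding T_rec w_def ..
  also have "\<dots> \<le> (\<Sum>t\<in>{-R<..<R}. cmod (T (Suc s) R (w t)))" by (rule norm_sum)
  also have "\<dots> \<le> (\<Sum>t\<in>{-R<..<R}. \<Prod>S\<in>Pow {1..Suc s}. nrm (Suc s) R (w t S))"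
    by (intro sum_mono Suc.IH wsupp)
  also have "\<dots> = (\<Sum>t\<in>{-R<..<R}. (\<Prod>S\<in>Pow {1..Suc s}. cmod (U (Suc s) R (w t S))) powr (1 / card (Pow {1..Suc s})))"
    by (simp add: nrm_def prod_powr_distrib card_Pow)
  also have "\<dots> \<le> (\<Prod>S\<in>Pow {1..Suc s}. (\<Sum>t\<in>{-R<..<R}. cmod (U (Suc s) R (w t S))) powr (1 / card (Pow {1..Suc s})))"
    by (rule holder) auto
  also have "\<dots> \<le> (\<Prod>S\<in>Pow {1..Suc s}. (sqrt (cmod (U (Suc (Suc s)) R (g S))) * sqrt (cmod (U (Suc (Suc s)) R (g (insert (Suc (Suc s)) S))))) powr (1 / card (Pow {1..Suc s})))"
  proof (intro prod_mono conjI powr_mono2)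
    fix S
    have "(\<Sum>t\<in>{-R<..<R}. cmod (U (Suc s) R (w t S))) = cmod (\<Sum>t\<in>{-R<..<R}. U (Suc s) R (w t S))"
      by (rule sum_cmod_real) (use wsupp U_Suc_real in auto)
    also have "(\<Sum>t\<in>{-R<..<R}. U (Suc s) R (w t S)) = T (Suc (Suc s)) R (\<lambda>S'. if Suc (Suc s) \<in> S' then g (insert (Suc (Suc s)) S) else g S)"
      unfolding U_rec_sum w_def ..
    also have "cmod \<dots> \<le> sqrt (cmod (U (Suc (Suc s)) R (g S))) * sqrt (cmod (U (Suc (Suc s)) R (g (insert (Suc (Suc s)) S))))"
      by (rule T_CS) (use Suc.prems in auto)
    finally show "(\<Sum>t\<in>{-R<..<R}. cmod (U (Suc s) R (w t S))) \<le> sqrt (cmod (U (Suc (Suc s)) R (g S))) * sqrt (cmod (U (Suc (Suc s)) R (g (insert (Suc (Suc s)) S))))" .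
  qed (auto simp: sum_nonneg)
  also have "\<dots> = (\<Prod>S\<in>Pow {1..Suc s}. nrm (Suc (Suc s)) R (g S) * nrm (Suc (Suc s)) R (g (insert (Suc (Suc s)) S)))"
  proof (intro prod.cong refl)
    fix S
    have c: "real (card (Pow {1..Suc s})) = 2 ^ Suc s" by (simp add: card_Pow)
    have a: "sqrt (cmod (U (Suc (Suc s)) R (g S))) powr (1 / 2 ^ Suc s) = nrm (Suc (Suc s)) R (g S)"
      unfolding nrm_def by (rule sqrt_powr) simp
    have b: "sqrt (cmod (U (Suc (Suc s)) R (g (insert (Suc (Suc s)) S)))) powr (1 / 2 ^ Suc s) = nrm (Suc (Suc s)) R (g (insert (Suc (Suc s)) S))"
      unfolding nrm_def by (rule sqrt_powr) simp
    show "(sqrt (cmod (U (Suc (Suc s)) R (g S))) * sqrt (cmod (U (Suc (Suc s)) R (g (insert (Suc (Suc s)) S))))) powr (1 / card (Pow {1..Suc s}))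
      = nrm (Suc (Suc s)) R (g S) * nrm (Suc (Suc s)) R (g (insert (Suc (Suc s)) S))"
      unfolding c powr_mult a b ..
  qed
  also have "\<dots> = (\<Prod>S\<in>Pow {1..Suc (Suc s)}. nrm (Suc (Suc s)) R (g S))" by (rule prod_Pow_Suc[symmetric])
  finally show ?case .
qed

lemma T_hbox: "T s R g = (\<Sum>h\<in>hbox s R. \<Sum>x\<in>{0..<R}. \<Prod>S\<in>Pow {1..s}. conj_pow (card S) (g S (x + (\<Sum>i\<in>S. h i))))"
  unfolding T_def sum_gbox by (intro sum.cong prod.cong refl) (auto simp: pt_upd0)

lemma U_add_expand:
  "U s R (\<lambda>y. u y + v y) = (\<Sum>X\<in>Pow (Pow {1..s}). T s R (\<lambda>S. if S \<in> X then u else v))"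
proof -
  have "U s R (\<lambda>y. u y + v y) = (\<Sum>n\<in>gbox s R. \<Sum>X\<in>Pow (Pow {1..s}).
      (\<Prod>S\<in>X. conj_pow (card S) (u (pt n S))) * (\<Prod>S\<in>Pow {1..s} - X. conj_pow (card S) (v (pt n S))))"
    unfolding U_def T_def conj_pow_add by (intro sum.cong refl prod_add) simp
  also have "\<dots> = (\<Sum>X\<in>Pow (Pow {1..s}). \<Sum>n\<in>gbox s R.
      (\<Prod>S\<in>X. conj_pow (card S) (u (pt n S))) * (\<Prod>S\<in>Pow {1..s} - X. conj_pow (card S) (v (pt n S))))"
    by (rule sum.swap)
  also have "\<dots> = (\<Sum>X\<in>Pow (Pow {1..s}). T s R (\<lambda>S. if S \<in> X then u else v))"
    unfolding T_def
  proof (intro sum.cong refl)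
    fix X n assume X: "X \<in> Pow (Pow {1..s})"
    have "(\<Prod>S\<in>Pow {1..s}. conj_pow (card S) ((if S \<in> X then u else v) (pt n S))) =
      (\<Prod>S\<in>Pow {1..s}. if S \<in> X then conj_pow (card S) (u (pt n S)) else conj_pow (card S) (v (pt n S)))"
      by (intro prod.cong refl) auto
    also have "\<dots> = (\<Prod>S\<in>Pow {1..s} \<inter> {S. S \<in> X}. conj_pow (card S) (u (pt n S))) * (\<Prod>S\<in>Pow {1..s} \<inter> - {S. S \<in> X}. conj_pow (card S) (v (pt n S)))"
      by (rule prod.If_cases) simp
    also have "Pow {1..s} \<inter> {S. S \<in> X} = X" using X by auto
    also have "Pow {1..s} \<inter> - {S. S \<in> X} = Pow {1..s} - X" by auto
    finally show "(\<Prod>S\<in>X. conj_pow (card S) (u (pt n S))) * (\<Prod>S\<in>Pow {1..s} - X. conj_pow (card S) (v (pt n S))) =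
      (\<Prod>S\<in>Pow {1..s}. conj_pow (card S) ((if S \<in> X then u else v) (pt n S)))" by simp
  qed
  finally show ?thesis .
qed

lemma pow_powr_inv: "0 \<le> (x::real) \<Longrightarrow> m > 0 \<Longrightarrow> (x ^ m) powr (1 / m) = x"
proof (cases "x = 0")
  case False
  assume "0 \<le> x" "m > 0"
  then have "x > 0" using False by simp
  then show ?thesis using \<open>m > 0\<close> by (simp add: powr_realpow[symmetric] powr_powr)
qed simp

lemma nrm_nonneg: "nrm s R w \<ge> 0"
  unfolding nrm_def by simp

lemma supp_add: "supp_in R u \<Longrightarrow> supp_in R v \<Longrightarrow> supp_in R (\<lambda>y. u y + v y)"
  unfolding supp_in_def by (metis add.right_neutral)

lemma nrm_triangle:
  assumes "supp_in R u" "supp_in R v"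
  shows "nrm (Suc s) R (\<lambda>y. u y + v y) \<le> nrm (Suc s) R u + nrm (Suc s) R v"
proof -
  define a where "a = nrm (Suc s) R u"
  define b where "b = nrm (Suc s) R v"
  define P where "P = Pow {1..Suc s}"
  have finP: "finite P" unfolding P_def by simp
  have cP: "card P = 2 ^ Suc s" unfolding P_def by (simp add: card_Pow)
  have "cmod (U (Suc s) R (\<lambda>y. u y + v y)) \<le> (\<Sum>X\<in>Pow P. cmod (T (Suc s) R (\<lambda>S. if S \<in> X then u else v)))"
    unfolding U_add_expand P_def by (rule norm_sum)
  also have "\<dots> \<le> (\<Sum>X\<in>Pow P. \<Prod>S\<in>P. nrm (Suc s) R (if S \<in> X then u else v))"
    unfolding P_def by (intro sum_mono GCS) (use assms in auto)
  also have "\<dots> = (\<Sum>X\<in>Pow P. (\<Prod>S\<in>X. a) * (\<Prod>S\<in>P - X. b))"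
  proof (intro sum.cong refl)
    fix X assume X: "X \<in> Pow P"
    have "(\<Prod>S\<in>P. nrm (Suc s) R (if S \<in> X then u else v)) = (\<Prod>S\<in>P. if S \<in> X then a else b)"
      unfolding a_def b_def by (intro prod.cong refl) auto
    also have "\<dots> = (\<Prod>S\<in>P \<inter> {S. S \<in> X}. a) * (\<Prod>S\<in>P \<inter> - {S. S \<in> X}. b)"
      by (rule prod.If_cases) (rule finP)
    also have "P \<inter> {S. S \<in> X} = X" using X by auto
    also have "P \<inter> - {S. S \<in> X} = P - X" by auto
    finally show "(\<Prod>S\<in>P. nrm (Suc s) R (if S \<in> X then u else v)) = (\<Prod>S\<in>X. a) * (\<Prod>S\<in>P - X. b)" .
  qed
  also have "\<dots> = (\<Prod>S\<in>P. a + b)"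
    by (rule prod_add[symmetric]) (rule finP)
  also have "\<dots> = (a + b) ^ (2 ^ Suc s)" using cP by simp
  finally have le: "cmod (U (Suc s) R (\<lambda>y. u y + v y)) \<le> (a + b) ^ (2 ^ Suc s)" .
  have ab: "a + b \<ge> 0" unfolding a_def b_def by (simp add: nrm_nonneg add_nonneg_nonneg)
  have "nrm (Suc s) R (\<lambda>y. u y + v y) \<le> ((a + b) ^ (2 ^ Suc s)) powr (1 / 2 ^ Suc s)"
    unfolding nrm_def by (rule powr_mono2) (use le in auto)
  also have "\<dots> = a + b" using pow_powr_inv[OF ab, of "2 ^ Suc s"] by simp
  finally show ?thesis unfolding a_def b_def .
qed

lemma T_scale: "T s R (\<lambda>S y. c * w S y) = (\<Prod>S\<in>Pow {1..s}. conj_pow (card S) c) * T s R w"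
  unfolding T_def by (simp add: conj_pow_mult prod.distrib sum_distrib_left)

lemma nrm_scale: "nrm s R (\<lambda>y. c * w y) = cmod c * nrm s R w"
proof -
  have pc: "cmod (\<Prod>S\<in>Pow {1..s}. conj_pow (card S) c) = cmod c ^ (2 ^ s)"
    by (simp add: prod_norm[symmetric] card_Pow)
  have "cmod (U s R (\<lambda>y. c * w y)) = cmod c ^ (2 ^ s) * cmod (U s R w)"
    unfolding U_def T_scale norm_mult pc ..
  then have "nrm s R (\<lambda>y. c * w y) = (cmod c ^ (2 ^ s)) powr (1 / 2 ^ s) * nrm s R w"
    unfolding nrm_def by (simp add: powr_mult)
  also have "(cmod c ^ (2 ^ s)) powr (1 / 2 ^ s) = cmod c"
    using pow_powr_inv[of "cmod c" "2 ^ s"] by simp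
  finally show ?thesis .
qed

lemma P_unit: "cmod c = 1 \<Longrightarrow> (\<Prod>S\<in>Pow {1..Suc s}. conj_pow (card S) c) = 1"
proof -
  assume c: "cmod c = 1"
  have "(\<Prod>S\<in>Pow {1..Suc s}. conj_pow (card S) c) = (\<Prod>S\<in>Pow {1..s}. conj_pow (card S) c * cnj (conj_pow (card S) c))"
    unfolding prod_Pow_Suc by (intro prod.cong refl) (simp add: card_ins conj_pow_Suc)
  also have "\<dots> = (\<Prod>S\<in>Pow {1..s}. 1)"
  proof (intro prod.cong refl)
    fix S
    have "conj_pow (card S) c * cnj (conj_pow (card S) c) = of_real ((cmod (conj_pow (card S) c))\<^sup>2)"
      by (simp only: complex_norm_square)
    then show "conj_pow (card S) c * cnj (conj_pow (card S) c) = 1" using c by simp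
  qed
  finally show ?thesis by simp
qed

lemma nrm_modulate:
  "nrm (Suc (Suc s)) R (\<lambda>y. cis (\<theta> * of_int y) * w y) = nrm (Suc (Suc s)) R w"
proof -
  have "U (Suc (Suc s)) R (\<lambda>y. cis (\<theta> * of_int y) * w y) = U (Suc (Suc s)) R w"
  proof -
    have e: "U (Suc (Suc s)) R u = (\<Sum>t\<in>{-R<..<R}. U (Suc s) R (\<lambda>y. u y * cnj (u (y+t))))" for u
      using U_rec_sum[of "Suc s" R u u] unfolding U_def by simp
    show ?thesis unfolding e
    proof (intro sum.cong refl)
      fix t
      have "U (Suc s) R (\<lambda>y. cis (\<theta> * of_int y) * w y * cnj (cis (\<theta> * of_int (y + t)) * w (y + t)))
         = U (Suc s) R (\<lambda>y. cis (- (\<theta> * of_int t)) * (w y * cnj (w (y + t))))"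
      proof (intro arg_cong[where f="U (Suc s) R"] ext)
        fix y
        have cs: "cis (\<theta> * of_int y) * cnj (cis (\<theta> * of_int (y + t))) = cis (- (\<theta> * of_int t))"
          by (simp add: cis_cnj cis_mult algebra_simps)
        have "cis (\<theta> * of_int y) * w y * cnj (cis (\<theta> * of_int (y + t)) * w (y + t))
          = (cis (\<theta> * of_int y) * cnj (cis (\<theta> * of_int (y + t)))) * (w y * cnj (w (y + t)))"
          by (simp only: complex_cnj_mult mult_ac)
        then show "cis (\<theta> * of_int y) * w y * cnj (cis (\<theta> * of_int (y + t)) * w (y + t))
          = cis (- (\<theta> * of_int t)) * (w y * cnj (w (y + t)))" unfolding cs .
      qed
      also have "\<dots> = U (Suc s) R (\<lambda>y. w y * cnj (w (y + t)))"
        unfolding U_def T_scale using P_unit[of "cis (- (\<theta> * of_int t))" s] by simp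
      finally show "U (Suc s) R (\<lambda>y. cis (\<theta> * of_int y) * w y * cnj (cis (\<theta> * of_int (y + t)) * w (y + t)))
         = U (Suc s) R (\<lambda>y. w y * cnj (w (y + t)))" .
    qed
  qed
  then show ?thesis unfolding nrm_def by simp
qed

lemma U_hbox: "U s R w = (\<Sum>h\<in>hbox s R. \<Sum>x\<in>{0..<R}. \<Prod>S\<in>Pow {1..s}. conj_pow (card S) (w (x + (\<Sum>i\<in>S. h i))))"
  unfolding U_def T_hbox ..

lemma nrm_translate:
  assumes "supp_in R w" "supp_in R (\<lambda>y. w (y + a))"
  shows "nrm s R (\<lambda>y. w (y + a)) = nrm s R w"
proof -
  define F where "F h y = (\<Prod>S\<in>Pow {1..s}. conj_pow (card S) (w (y + (\<Sum>i\<in>S. h i))))" for h y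
  have e1: "U s R (\<lambda>y. w (y + a)) = (\<Sum>h\<in>hbox s R. \<Sum>x\<in>{0..<R}. F h (x + a))"
    unfolding U_hbox F_def by (simp add: ac_simps)
  have e2: "U s R w = (\<Sum>h\<in>hbox s R. \<Sum>x\<in>{0..<R}. F h x)"
    unfolding U_hbox F_def ..
  have "U s R (\<lambda>y. w (y + a)) = U s R w"
    unfolding e1 e2
  proof (rule sum.cong[OF refl])
    fix h
    have Fz: "F h y \<noteq> 0 \<Longrightarrow> w y \<noteq> 0" for y
      unfolding F_def using prod_nz[of "Pow {1..s}" "{}" "\<lambda>S. conj_pow (card S) (w (y + (\<Sum>i\<in>S. h i)))"] by auto
    show "(\<Sum>x\<in>{0..<R}. F h (x + a)) = (\<Sum>y\<in>{0..<R}. F h y)"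
    proof (rule sum_shift_int)
      fix y assume "F h y \<noteq> 0"
      then have "w y \<noteq> 0" by (rule Fz)
      then have "w ((y - a) + a) \<noteq> 0" by simp
      then show "(y - a \<in> {0..<R}) = (y \<in> {0..<R})"
        using assms \<open>w y \<noteq> 0\<close> unfolding supp_in_def by (metis atLeastLessThan_iff)
    qed auto
  qed
  then show ?thesis unfolding nrm_def by simp
qed

lemma U_zero: "U s R (\<lambda>_. 0) = 0"
  unfolding U_def T_def
  by (intro sum.neutral ballI prod_zero) auto

lemma nrm_zero: "nrm s R (\<lambda>_. 0) = 0"
  unfolding nrm_def U_zero by simp

lemma supp_sum: "(\<And>j. j \<in> J \<Longrightarrow> supp_in R (F j)) \<Longrightarrow> supp_in R (\<lambda>y. \<Sum>j\<in>J. F j y)"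
  unfolding supp_in_def by (metis (mono_tags, lifting) sum.neutral)

lemma nrm_sum:
  assumes "finite J" "\<And>j. j \<in> J \<Longrightarrow> supp_in R (F j)"
  shows "nrm (Suc s) R (\<lambda>y. \<Sum>j\<in>J. F j y) \<le> (\<Sum>j\<in>J. nrm (Suc s) R (F j))"
  using assms
proof (induction J rule: finite_induct)
  case empty
  then show ?case by (simp add: nrm_zero)
next
  case (insert j J)
  have "nrm (Suc s) R (\<lambda>y. \<Sum>j\<in>insert j J. F j y) = nrm (Suc s) R (\<lambda>y. F j y + (\<Sum>j\<in>J. F j y))"
    using insert by simp
  also have "\<dots> \<le> nrm (Suc s) R (F j) + nrm (Suc s) R (\<lambda>y. \<Sum>j\<in>J. F j y)"
    using nrm_triangle[of R "F j" "\<lambda>y. \<Sum>j\<in>J. F j y" s] insert.prems by (auto intro: supp_sum)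
  also have "\<dots> \<le> nrm (Suc s) R (F j) + (\<Sum>j\<in>J. nrm (Suc s) R (F j))"
    using insert by auto
  finally show ?case using insert by simp
qed

definition ee :: "nat \<Rightarrow> nat \<Rightarrow> int \<Rightarrow> complex" where
  "ee P \<xi> y = cis (2 * pi * real \<xi> * of_int y / real P)"

lemma ee_mult: "ee P \<xi> a * ee P \<xi> b = ee P \<xi> (a + b)"
  unfolding ee_def cis_mult by (simp add: add_divide_distrib distrib_left)

lemma ee_cnj: "cnj (ee P \<xi> a) = ee P \<xi> (- a)"
  unfolding ee_def cis_cnj by simp

lemma ee_zero[simp]: "ee P \<xi> 0 = 1"
  unfolding ee_def by simp

lemma orth:
  fixes m :: int
  assumes P: "P > 0" "\<bar>m\<bar> < int P"
  shows "(\<Sum>\<xi><P. ee P \<xi> m) = (if m = 0 then of_nat P else 0)"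
proof (cases "m = 0")
  case True
  then show ?thesis by simp
next
  case False
  define z where "z = cis (2 * pi * of_int m / real P)"
  have zp: "ee P \<xi> m = z ^ \<xi>" for \<xi>
  proof -
    have "z ^ \<xi> = cis (real \<xi> * (2 * pi * of_int m / real P))" unfolding z_def by (rule Complex.DeMoivre)
    then show ?thesis by (simp add: ee_def algebra_simps)
  qed
  have z1: "z \<noteq> 1"
  proof
    assume "z = 1"
    then have "cos (2 * pi * of_int m / real P) = 1" unfolding z_def by (simp add: complex_eq_iff)
    then obtain n :: int where n: "2 * pi * of_int m / real P = of_int n * 2 * pi"
      by (auto simp: cos_one_2pi_int)
    then have "of_int m = of_int n * (real P)" using P by (simp add: field_simps)
    then have "m = n * int P" by (metis of_int_eq_iff of_int_mult of_int_of_nat_eq)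
    then have "\<bar>m\<bar> = \<bar>n\<bar> * int P" by (simp add: abs_mult)
    moreover have "n \<noteq> 0" using \<open>m = n * int P\<close> False by auto
    moreover have "\<bar>n\<bar> \<ge> 1" using \<open>n \<noteq> 0\<close> by linarith
    ultimately have "\<bar>m\<bar> \<ge> int P" by (metis mult_le_cancel_right1 of_nat_0_le_iff mult.commute mult_left_mono mult.right_neutral)
    then show False using P by simp
  qed
  have zP: "z ^ P = 1"
  proof -
    have "z ^ P = cis (2 * pi * of_int m)" unfolding z_def Complex.DeMoivre using P by simp
    also have "\<dots> = 1" by (rule cis_multiple_2pi) simp
    finally show ?thesis .
  qed
  have "(\<Sum>\<xi><P. z ^ \<xi>) = (z ^ P - 1) / (z - 1)" by (rule geometric_sum[OF z1])
  then show ?thesis using zP False by (simp add: zp)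
qed

lemma parseval:
  assumes Y: "finite Y" and P: "P > 0" and d: "\<And>y y'. y \<in> Y \<Longrightarrow> y' \<in> Y \<Longrightarrow> \<bar>y - y'\<bar> < int P"
  shows "(\<Sum>\<xi><P. (cmod (\<Sum>y\<in>Y. ee P \<xi> (- y)))\<^sup>2) = real P * card Y"
proof -
  have "complex_of_real (\<Sum>\<xi><P. (cmod (\<Sum>y\<in>Y. ee P \<xi> (- y)))\<^sup>2)
     = (\<Sum>\<xi><P. (\<Sum>y\<in>Y. ee P \<xi> (- y)) * cnj (\<Sum>y\<in>Y. ee P \<xi> (- y)))"
    by (simp only: of_real_sum complex_norm_square)
  also have "\<dots> = (\<Sum>\<xi><P. \<Sum>y\<in>Y. \<Sum>y'\<in>Y. ee P \<xi> (y - y'))"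
    by (simp only: sum_distrib_left sum_distrib_right ee_cnj ee_mult flip: sum_cnj) (simp add: algebra_simps)
  also have "\<dots> = (\<Sum>y\<in>Y. \<Sum>y'\<in>Y. \<Sum>\<xi><P. ee P \<xi> (y - y'))"
    by (subst sum.swap) (subst (2) sum.swap, rule refl)
  also have "\<dots> = (\<Sum>y\<in>Y. \<Sum>y'\<in>Y. if y' = y then of_nat P else 0)"
    by (intro sum.cong refl) (subst orth, use P d in auto)
  also have "\<dots> = of_real (real P * card Y)" using Y by simp
  finally show ?thesis by (simp only: of_real_eq_iff)
qed

definition phi :: "int \<Rightarrow> int \<Rightarrow> int \<Rightarrow> real" where
  "phi L K x = real (card ({0..<L} \<inter> {x-K<..x})) / of_int K"

definition cc :: "nat \<Rightarrow> int \<Rightarrow> int \<Rightarrow> nat \<Rightarrow> complex" where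
  "cc P L K \<xi> = (\<Sum>y\<in>{0..<L}. ee P \<xi> (- y)) * (\<Sum>z\<in>{0..<K}. ee P \<xi> (- z)) / (of_int K * of_nat P)"

lemma fourier_phi:
  assumes K: "K > 0" and L: "L \<ge> 0" and x: "0 \<le> x" "x < int P" and LK: "L + K \<le> int P"
  shows "(\<Sum>\<xi><P. cc P L K \<xi> * ee P \<xi> x) = of_real (phi L K x)"
proof -
  have P: "P > 0" using x by simp
  have "(\<Sum>\<xi><P. cc P L K \<xi> * ee P \<xi> x) = (\<Sum>\<xi><P. \<Sum>y\<in>{0..<L}. \<Sum>z\<in>{0..<K}. ee P \<xi> (x - y - z) / (of_int K * of_nat P))"
    unfolding cc_def by (simp add: sum_distrib_left sum_distrib_right sum_divide_distrib ee_mult algebra_simps)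
  also have "\<dots> = (\<Sum>y\<in>{0..<L}. \<Sum>z\<in>{0..<K}. (\<Sum>\<xi><P. ee P \<xi> (x - y - z)) / (of_int K * of_nat P))"
    by (subst sum.swap) (intro sum.cong refl, subst sum.swap, simp add: sum_divide_distrib)
  also have "\<dots> = (\<Sum>y\<in>{0..<L}. \<Sum>z\<in>{0..<K}. (if z = x - y then 1 / of_int K else 0))"
  proof (intro sum.cong refl)
    fix y z assume y: "y \<in> {0..<L}" and z: "z \<in> {0..<K}"
    have "\<bar>x - y - z\<bar> < int P" using x y z LK by auto
    then show "(\<Sum>\<xi><P. ee P \<xi> (x - y - z)) / (of_int K * of_nat P) = (if z = x - y then 1 / of_int K else 0)"
      using P by (subst orth) auto
  qed
  also have "\<dots> = (\<Sum>y\<in>{0..<L}. if x - y \<in> {0..<K} then 1 / of_int K else 0)"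
    by (intro sum.cong refl) simp
  also have "\<dots> = of_nat (card ({0..<L} \<inter> {y. x - y \<in> {0..<K}})) / of_int K"
    by (simp add: sum.If_cases)
  also have "{0..<L} \<inter> {y. x - y \<in> {0..<K}} = {0..<L} \<inter> {x-K<..x}" by auto
  finally show ?thesis unfolding phi_def by simp
qed

lemma phi_bounds: "K > 0 \<Longrightarrow> 0 \<le> phi L K x \<and> phi L K x \<le> 1"
proof -
  assume K: "K > 0"
  have "card ({0..<L} \<inter> {x-K<..x}) \<le> card {x-K<..x}" by (intro card_mono) auto
  also have "\<dots> = nat K" by simp
  finally show ?thesis unfolding phi_def using K by (simp add: divide_le_eq)
qed

lemma phi_one: "K > 0 \<Longrightarrow> K - 1 \<le> x \<Longrightarrow> x < L \<Longrightarrow> phi L K x = 1"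
proof -
  assume K: "K > 0" and "K - 1 \<le> x" "x < L"
  then have "{0..<L} \<inter> {x-K<..x} = {x-K<..x}" by auto
  then show ?thesis unfolding phi_def using K by simp
qed

lemma phi_zero: "L + K - 1 \<le> x \<Longrightarrow> phi L K x = 0"
proof -
  assume "L + K - 1 \<le> x"
  then have "{0..<L} \<inter> {x-K<..x} = {}" by auto
  then show ?thesis unfolding phi_def by simp
qed

lemma cc_l1:
  assumes K: "K > 0" and L: "L \<ge> 0" and KP: "K \<le> int P" and LP: "L \<le> int P"
  shows "(\<Sum>\<xi><P. cmod (cc P L K \<xi>)) \<le> sqrt (of_int L) / sqrt (of_int K)"
proof -
  have P: "P > 0" using K KP by simp
  define A where "A \<xi> = cmod (\<Sum>y\<in>{0..<L}. ee P \<xi> (- y))" for \<xi>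
  define B where "B \<xi> = cmod (\<Sum>z\<in>{0..<K}. ee P \<xi> (- z))" for \<xi>
  have pA: "(\<Sum>\<xi><P. (A \<xi>)\<^sup>2) = real P * of_int L"
    unfolding A_def by (subst parseval) (use P L LP in auto)
  have pB: "(\<Sum>\<xi><P. (B \<xi>)\<^sup>2) = real P * of_int K"
    unfolding B_def by (subst parseval) (use P K KP in auto)
  have "(\<Sum>\<xi><P. cmod (cc P L K \<xi>)) = (\<Sum>\<xi><P. A \<xi> * B \<xi>) / (of_int K * real P)"
    unfolding cc_def A_def B_def using K by (simp add: norm_mult norm_divide sum_divide_distrib)
  also have "\<dots> \<le> sqrt (\<Sum>\<xi><P. (A \<xi>)\<^sup>2) * sqrt (\<Sum>\<xi><P. (B \<xi>)\<^sup>2) / (of_int K * real P)"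
    by (intro divide_right_mono CS_sqrt) (use K in simp)
  also have "\<dots> = sqrt (real P) * sqrt (of_int L) * (sqrt (real P) * sqrt (of_int K)) / (of_int K * real P)"
    unfolding pA pB by (simp add: real_sqrt_mult)
  also have "\<dots> = sqrt (of_int L) / sqrt (of_int K)"
  proof -
    have "sqrt (real P) * sqrt (real P) = real P" by simp
    moreover have "sqrt (of_int K) * sqrt (of_int K) = (of_int K :: real)" using K by simp
    ultimately show ?thesis using K P
      by (simp add: field_simps)
  qed
  finally show ?thesis .
qed

lemma err_bound:
  fixes h :: "int \<Rightarrow> complex" and M :: int
  assumes h1: "\<And>y. cmod (h y) \<le> 1" and hz: "\<And>y. h y \<noteq> 0 \<Longrightarrow> y \<in> E \<and> 0 \<le> y \<and> y < M"
    and E: "finite E" and M: "M \<ge> 0"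
  shows "cmod (U s R h) \<le> real (card E) * real (nat M) ^ s"
proof -
  define Q where "Q x = PiE {1..s} (\<lambda>_. {-x..<M-x})" for x :: int
  have cQ: "card (Q x) = nat M ^ s" for x
    unfolding Q_def by (simp add: card_PiE)
  have pw: "(\<Prod>S\<in>Pow {1..s}. cmod (h (x + (\<Sum>i\<in>S. hh i)))) \<le> (if x \<in> E \<and> hh \<in> Q x then 1 else 0)"
    if hh: "hh \<in> hbox s R" for hh x
  proof (cases "x \<in> E \<and> hh \<in> Q x")
    case True
    then show ?thesis using h1 by (simp add: prod_le_1)
  next
    case False
    have z: "(\<Prod>S\<in>Pow {1..s}. cmod (h (x + (\<Sum>i\<in>S. hh i)))) = 0"
    proof (cases "x \<in> E")
      case False
      then have "h x = 0" using hz by blast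
      then show ?thesis by (intro prod_zero bexI[of _ "{}"]) auto
    next
      case True
      with False have "hh \<notin> Q x" by blast
      moreover have "hh \<in> extensional {1..s}" using hh unfolding hbox_def by (simp add: PiE_iff)
      ultimately obtain i where i: "i \<in> {1..s}" "hh i \<notin> {-x..<M-x}"
        unfolding Q_def PiE_iff by auto
      then have "h (x + hh i) = 0" using hz by force
      then show ?thesis using i by (intro prod_zero bexI[of _ "{i}"]) auto
    qed
    show ?thesis unfolding z using False by simp
  qed
  have "cmod (U s R h) \<le> (\<Sum>hh\<in>hbox s R. \<Sum>x\<in>{0..<R}. \<Prod>S\<in>Pow {1..s}. cmod (h (x + (\<Sum>i\<in>S. hh i))))"
    unfolding U_hbox
    by (rule order_trans[OF norm_sum], rule sum_mono, rule order_trans[OF norm_sum])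
       (simp add: prod_norm[symmetric])
  also have "\<dots> \<le> (\<Sum>hh\<in>hbox s R. \<Sum>x\<in>{0..<R}. (if x \<in> E \<and> hh \<in> Q x then 1 else 0))"
    by (intro sum_mono pw)
  also have "\<dots> = (\<Sum>x\<in>{0..<R}. \<Sum>hh\<in>hbox s R. (if x \<in> E \<and> hh \<in> Q x then 1 else 0))"
    by (rule sum.swap)
  also have "\<dots> \<le> (\<Sum>x\<in>{0..<R}. if x \<in> E then real (nat M ^ s) else 0)"
  proof (rule sum_mono)
    fix x
    show "(\<Sum>hh\<in>hbox s R. (if x \<in> E \<and> hh \<in> Q x then 1 else 0)) \<le> (if x \<in> E then real (nat M ^ s) else 0)"
    proof (cases "x \<in> E")
      case True
      have "(\<Sum>hh\<in>hbox s R. (if x \<in> E \<and> hh \<in> Q x then 1 else 0)) = real (card (hbox s R \<inter> Q x))"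
        using True by (simp add: sum.If_cases)
      also have "\<dots> \<le> real (card (Q x))"
        by (intro of_nat_mono card_mono) (auto simp: Q_def intro!: finite_PiE)
      finally show ?thesis using True cQ by simp
    qed simp
  qed
  also have "\<dots> = real (card ({0..<R} \<inter> E)) * real (nat M ^ s)"
    by (simp add: sum.If_cases)
  also have "\<dots> \<le> real (card E) * real (nat M) ^ s"
    unfolding of_nat_power by (intro mult_right_mono of_nat_mono card_mono E) auto
  finally show ?thesis .
qed

definition gX :: "(nat \<Rightarrow> complex) \<Rightarrow> int \<Rightarrow> int \<Rightarrow> complex" where
  "gX f X y = (if 0 \<le> y \<and> y < X then f (nat y) else 0)"

lemma supp_gX: "X \<le> R \<Longrightarrow> supp_in R (gX f X)"
  unfolding supp_in_def gX_def by auto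

lemma supp_mult_left: "supp_in R w \<Longrightarrow> supp_in R (\<lambda>y. c y * w y)"
  unfolding supp_in_def by auto

lemma ee_cis: "ee P \<xi> y = cis ((2 * pi * real \<xi> / real P) * of_int y)"
  unfolding ee_def by (simp add: algebra_simps)

lemma cmod_sub_real: "0 \<le> p \<Longrightarrow> p \<le> 1 \<Longrightarrow> cmod (1 - complex_of_real p) \<le> 1"
proof -
  assume p: "0 \<le> p" "p \<le> 1"
  have e: "1 - complex_of_real p = complex_of_real (1 - p)" by simp
  show ?thesis unfolding e norm_of_real using p by simp
qed

lemma restriction:
  fixes f :: "nat \<Rightarrow> complex" and L M K R :: int
  assumes f1: "\<And>n. cmod (f n) \<le> 1" and L: "0 \<le> L" "L \<le> M" and K: "0 < K" and MR: "M \<le> R"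
  shows "nrm (Suc (Suc s)) R (gX f L) \<le> sqrt (of_int L) / sqrt (of_int K) * nrm (Suc (Suc s)) R (gX f M)
     + (2 * of_int K * of_int M ^ Suc (Suc s)) powr (1 / 2 ^ Suc (Suc s))"
proof -
  define P where "P = nat (M + K)"
  define ind where "ind y = (if y < L then 1 else (0::complex))" for y
  define F where "F y = (\<Sum>\<xi><P. cc P L K \<xi> * ee P \<xi> y)" for y
  define hf where "hf y = gX f M y * (ind y - F y)" for y
  define E where "E = {0..<K-1} \<union> {L..<L+K-1}"
  have FM: "F y = of_real (phi L K y)" if "0 \<le> y" "y < M" for y
    unfolding F_def by (rule fourier_phi) (use that K L P_def in auto)
  have decomp: "gX f L = (\<lambda>y. (\<Sum>\<xi><P. cc P L K \<xi> * (ee P \<xi> y * gX f M y)) + hf y)"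
  proof
    fix y
    have "(\<Sum>\<xi><P. cc P L K \<xi> * (ee P \<xi> y * gX f M y)) = gX f M y * F y"
      unfolding F_def by (simp add: sum_distrib_left algebra_simps)
    then show "gX f L y = (\<Sum>\<xi><P. cc P L K \<xi> * (ee P \<xi> y * gX f M y)) + hf y"
      unfolding hf_def ind_def gX_def using L by (auto simp: algebra_simps)
  qed
  have sM: "supp_in R (gX f M)" by (rule supp_gX[OF MR])
  have s1: "supp_in R (\<lambda>y. \<Sum>\<xi><P. cc P L K \<xi> * (ee P \<xi> y * gX f M y))"
    by (intro supp_sum) (use MR in \<open>auto simp: supp_in_def gX_def\<close>)
  have s2: "supp_in R hf" unfolding hf_def using sM by (auto simp: supp_in_def)
  have "nrm (Suc (Suc s)) R (gX f L) \<le> nrm (Suc (Suc s)) R (\<lambda>y. \<Sum>\<xi><P. cc P L K \<xi> * (ee P \<xi> y * gX f M y)) + nrm (Suc (Suc s)) R hf"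
    unfolding decomp by (rule nrm_triangle[OF s1 s2])
  also have "nrm (Suc (Suc s)) R (\<lambda>y. \<Sum>\<xi><P. cc P L K \<xi> * (ee P \<xi> y * gX f M y)) \<le> (\<Sum>\<xi><P. nrm (Suc (Suc s)) R (\<lambda>y. cc P L K \<xi> * (ee P \<xi> y * gX f M y)))"
    by (rule nrm_sum) (use MR in \<open>auto simp: supp_in_def gX_def\<close>)
  also have "\<dots> = (\<Sum>\<xi><P. cmod (cc P L K \<xi>) * nrm (Suc (Suc s)) R (gX f M))"
  proof (intro sum.cong refl)
    fix \<xi>
    have "nrm (Suc (Suc s)) R (\<lambda>y. cc P L K \<xi> * (ee P \<xi> y * gX f M y)) = cmod (cc P L K \<xi>) * nrm (Suc (Suc s)) R (\<lambda>y. ee P \<xi> y * gX f M y)"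
      by (rule nrm_scale)
    also have "(\<lambda>y. ee P \<xi> y * gX f M y) = (\<lambda>y. cis ((2 * pi * real \<xi> / real P) * of_int y) * gX f M y)"
      by (simp only: ee_cis)
    also have "nrm (Suc (Suc s)) R \<dots> = nrm (Suc (Suc s)) R (gX f M)"
      by (rule nrm_modulate)
    finally show "nrm (Suc (Suc s)) R (\<lambda>y. cc P L K \<xi> * (ee P \<xi> y * gX f M y)) = cmod (cc P L K \<xi>) * nrm (Suc (Suc s)) R (gX f M)"
      by (simp only: ee_cis)
  qed
  also have "\<dots> = (\<Sum>\<xi><P. cmod (cc P L K \<xi>)) * nrm (Suc (Suc s)) R (gX f M)"
    by (simp add: sum_distrib_right)
  also have "\<dots> \<le> sqrt (of_int L) / sqrt (of_int K) * nrm (Suc (Suc s)) R (gX f M)"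
    by (intro mult_right_mono cc_l1 nrm_nonneg) (use K L P_def in auto)
  also have "nrm (Suc (Suc s)) R hf \<le> (2 * of_int K * of_int M ^ Suc (Suc s)) powr (1 / 2 ^ Suc (Suc s))"
  proof -
    have hf1: "cmod (hf y) \<le> 1" for y
    proof (cases "0 \<le> y \<and> y < M")
      case True
      have "cmod (ind y - F y) \<le> 1"
        using phi_bounds[OF K, of L y] unfolding FM[OF conjunct1[OF True] conjunct2[OF True]] ind_def
        by (auto simp: cmod_sub_real)
      moreover have "cmod (gX f M y) \<le> 1" unfolding gX_def using f1 by auto
      ultimately show ?thesis unfolding hf_def norm_mult by (simp add: mult_le_one)
    qed (auto simp: hf_def gX_def)
    have hfz: "y \<in> E \<and> 0 \<le> y \<and> y < M" if "hf y \<noteq> 0" for y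
    proof -
      have y: "0 \<le> y" "y < M" using that unfolding hf_def gX_def by (auto split: if_splits)
      have "y \<in> E"
      proof (rule ccontr)
        assume "y \<notin> E"
        then have c: "(K - 1 \<le> y \<and> y < L) \<or> L + K - 1 \<le> y" unfolding E_def using y by auto
        have "ind y = F y"
          using c phi_one[OF K] phi_zero[of L K y] K unfolding FM[OF y] ind_def by auto
        then show False using that unfolding hf_def by simp
      qed
      then show ?thesis using y by simp
    qed
    have cE: "card E \<le> 2 * nat K"
    proof -
      have "card E \<le> card {0..<K-1} + card {L..<L+K-1}" unfolding E_def by (rule card_Un_le)
      also have "\<dots> \<le> 2 * nat K" by simp
      finally show ?thesis .
    qed
    have "cmod (U (Suc (Suc s)) R hf) \<le> real (card E) * real (nat M) ^ Suc (Suc s)"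
      by (rule err_bound) (use hf1 hfz L in \<open>auto simp: E_def\<close>)
    also have "\<dots> \<le> 2 * of_int K * of_int M ^ Suc (Suc s)"
    proof -
      have "real (card E) \<le> 2 * of_int K" using cE K by linarith
      moreover have "real (nat M) = of_int M" using L by simp
      ultimately show ?thesis using L by (simp only:) (intro mult_right_mono, auto)
    qed
    finally show ?thesis unfolding nrm_def by (rule powr_mono2[rotated 2]) auto
  qed
  finally show ?thesis by simp
qed

lemma gowers_Pi_sub: "int N \<le> R \<Longrightarrow> gowers_Pi s N \<subseteq> gbox s R"
proof
  fix n assume R: "int N \<le> R" and n: "n \<in> gowers_Pi s N"
  then have ext: "n \<in> {0..s} \<rightarrow>\<^sub>E (UNIV :: int set)" and pts: "\<And>S. S \<subseteq> {1..s} \<Longrightarrow> n 0 + (\<Sum>i\<in>S. n i) \<in> {0..<int N}"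
    unfolding gowers_Pi_def by auto
  have n0: "n 0 \<in> {0..<int N}" using pts[of "{}"] by simp
  have ni: "n 0 + n i \<in> {0..<int N}" if "i \<in> {1..s}" for i using pts[of "{i}"] that by simp
  show "n \<in> gbox s R"
    unfolding gbox_def PiE_iff
  proof (intro conjI ballI)
    fix i assume i: "i \<in> {0..s}"
    show "n i \<in> (if i = 0 then {0..<R} else {-R<..<R})"
    proof (cases "i = 0")
      case True then show ?thesis using n0 R by auto
    next
      case False then have "i \<in> {1..s}" using i by auto
      then show ?thesis using ni[of i] n0 R False by auto
    qed
  next
    show "n \<in> extensional {0..s}" using ext by (simp add: PiE_iff)
  qed
qed

lemma link:
  assumes R: "int N \<le> R"
  shows "(\<Sum>n\<in>gowers_Pi s N. \<Prod>S\<in>Pow {1..s}. conj_pow (card S) (f (nat (n 0 + (\<Sum>i\<in>S. n i)))))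
    = U s R (gX f (int N))"
  unfolding U_def T_def
proof (rule sum.mono_neutral_cong_left)
  show "gowers_Pi s N \<subseteq> gbox s R" by (rule gowers_Pi_sub[OF R])
  show "\<forall>n\<in>gbox s R - gowers_Pi s N. (\<Prod>S\<in>Pow {1..s}. conj_pow (card S) (gX f (int N) (pt n S))) = 0"
  proof
    fix n assume n: "n \<in> gbox s R - gowers_Pi s N"
    then have ext: "n \<in> {0..s} \<rightarrow>\<^sub>E (UNIV :: int set)" unfolding gbox_def by (auto simp: PiE_iff)
    then obtain S where S: "S \<subseteq> {1..s}" "pt n S \<notin> {0..<int N}"
      using n unfolding gowers_Pi_def pt_def by auto
    show "(\<Prod>S\<in>Pow {1..s}. conj_pow (card S) (gX f (int N) (pt n S))) = 0"
      using S by (intro prod_zero bexI[of _ S]) (auto simp: gX_def)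
  qed
  show "\<And>n. n \<in> gowers_Pi s N \<Longrightarrow> (\<Prod>S\<in>Pow {1..s}. conj_pow (card S) (f (nat (n 0 + (\<Sum>i\<in>S. n i))))) =
      (\<Prod>S\<in>Pow {1..s}. conj_pow (card S) (gX f (int N) (pt n S)))"
    unfolding gowers_Pi_def gX_def pt_def by (intro prod.cong refl) auto
qed simp

lemma card_gbox: "R \<ge> 0 \<Longrightarrow> card (gbox s R) = nat R * nat (2 * R - 1) ^ s"
proof -
  assume R: "R \<ge> 0"
  have e: "{0..s} = insert 0 {1..s}" by auto
  have "card (gbox s R) = (\<Prod>i\<in>{0..s}. card (if i = 0 then {0..<R} else {-R<..<R}))"
    unfolding gbox_def by (simp add: card_PiE)
  also have "\<dots> = card {0..<R} * (\<Prod>i\<in>{1..s}. card {-R<..<R})"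
    unfolding e by (subst prod.insert) (auto intro!: prod.cong)
  also have "\<dots> = nat R * nat (2 * R - 1) ^ s" by simp
  finally show ?thesis .
qed

lemma card_Pi_upper: "card (gowers_Pi s N) \<le> N * (2 * N) ^ s"
proof -
  have "card (gowers_Pi s N) \<le> card (gbox s (int N))"
    by (intro card_mono gowers_Pi_sub) auto
  also have "\<dots> = N * nat (2 * int N - 1) ^ s" by (simp add: card_gbox)
  also have "\<dots> \<le> N * (2 * N) ^ s" by (intro mult_left_mono power_mono) auto
  finally show ?thesis .
qed

lemma card_Pi_lower:
  assumes N: "N \<ge> 1"
  shows "real (card (gowers_Pi s N)) \<ge> (real N / real (Suc s)) ^ Suc s"
proof -
  define a where "a = (N - 1) div Suc s + 1"
  have a1: "a \<ge> 1" unfolding a_def by simp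
  have aN: "(a - 1) * Suc s \<le> N - 1" unfolding a_def using div_times_less_eq_dividend[of "N - 1" "Suc s"] by simp
  have aN2: "a * Suc s \<ge> N"
  proof -
    have m1: "(N - 1) div Suc s * Suc s + (N - 1) mod Suc s = N - 1" by (rule div_mult_mod_eq)
    have m2: "(N - 1) mod Suc s < Suc s" by simp
    have "N - 1 < (N - 1) div Suc s * Suc s + Suc s" using m1 m2 by linarith
    then have "N - 1 < ((N - 1) div Suc s + 1) * Suc s" by (simp add: distrib_right)
    then show ?thesis unfolding a_def using N by linarith
  qed
  have key: "int (Suc s) * (int a - 1) \<le> int N - 1"
  proof -
    have "int ((a - 1) * Suc s) \<le> int (N - 1)" using aN by (simp only: of_nat_le_iff)
    then have "int (a - 1) * int (Suc s) \<le> int (N - 1)" by (simp only: of_nat_mult)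
    moreover have "int (a - 1) = int a - 1" using a1 by simp
    moreover have "int (N - 1) = int N - 1" using N by simp
    ultimately show ?thesis by (simp add: mult.commute)
  qed
  have sub: "PiE {0..s} (\<lambda>_. {0..<int a}) \<subseteq> gowers_Pi s N"
  proof
    fix n assume n: "n \<in> PiE {0..s} (\<lambda>_. {0..<int a})"
    have b: "0 \<le> n i \<and> n i \<le> int a - 1" if "i \<in> {0..s}" for i
      using n that unfolding PiE_iff by fastforce
    have "n 0 + (\<Sum>i\<in>S. n i) \<in> {0..<int N}" if S: "S \<subseteq> {1..s}" for S
    proof -
      have Si: "i \<in> S \<Longrightarrow> i \<in> {0..s}" for i using S by auto
      have "(\<Sum>i\<in>S. n i) \<le> of_nat (card S) * (int a - 1)"
        by (rule sum_bounded_above) (use b Si in blast)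
      also have "\<dots> \<le> int s * (int a - 1)"
      proof -
        have "card S \<le> card {1..s}" by (rule card_mono) (use S in auto)
        then have "int (card S) \<le> int s" by simp
        then show ?thesis using a1 by (intro mult_right_mono) auto
      qed
      finally have u: "(\<Sum>i\<in>S. n i) \<le> int s * (int a - 1)" .
      have l: "(\<Sum>i\<in>S. n i) \<ge> 0" by (rule sum_nonneg) (use b Si in blast)
      have n0: "0 \<le> n 0" "n 0 \<le> int a - 1" using b[of 0] by auto
      have e: "int (Suc s) * (int a - 1) = (int a - 1) + int s * (int a - 1)" by (simp add: algebra_simps)
      show ?thesis using u l n0 key e by simp
    qed
    moreover have "n \<in> {0..s} \<rightarrow>\<^sub>E (UNIV :: int set)" using n by (simp add: PiE_iff)
    ultimately show "n \<in> gowers_Pi s N" unfolding gowers_Pi_def by blast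
  qed
  have c1: "real (card (PiE {0..s} (\<lambda>_. {0..<int a}))) = real a ^ Suc s"
    by (simp add: card_PiE)
  have c2: "card (PiE {0..s} (\<lambda>_. {0..<int a})) \<le> card (gowers_Pi s N)"
  proof (rule card_mono[OF _ sub])
    have "gowers_Pi s N \<subseteq> gbox s (int N)" by (rule gowers_Pi_sub) simp
    then show "finite (gowers_Pi s N)" by (rule finite_subset) simp
  qed
  have c3: "real N / real (Suc s) \<le> real a"
  proof -
    have "real N \<le> real (a * Suc s)" using aN2 by (simp only: of_nat_le_iff)
    then have "real N \<le> real a * real (Suc s)" by (simp only: of_nat_mult)
    then show ?thesis by (simp add: divide_le_eq)
  qed
  have "(real N / real (Suc s)) ^ Suc s \<le> real a ^ Suc s" by (rule power_mono[OF c3]) simp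
  also have "\<dots> \<le> real (card (gowers_Pi s N))" using c1 c2 by (metis of_nat_le_iff)
  finally show ?thesis .
qed

lemma U_lower:
  assumes f1: "\<And>n. cmod (f n) = 1" and M: "0 \<le> M" "M \<le> R" and R0: "0 < R"
  shows "cmod (U (Suc (Suc s)) R (gX f M)) \<ge> (of_int M)\<^sup>2"
proof -
  define h0 where "h0 = (\<lambda>i::nat. if i \<in> {1..Suc s} then (0::int) else undefined)"
  have h0: "h0 \<in> hbox (Suc s) R"
    unfolding hbox_def h0_def using M R0 by (auto simp: PiE_iff extensional_def)
  have "Aval (Suc s) R (gX f M) h0 = (\<Sum>x\<in>{0..<R}. if x \<in> {0..<M} then 1 else 0)"
    unfolding Aval_def
  proof (intro sum.cong refl)
    fix x
    have "(\<Prod>S\<in>Pow {1..Suc s}. conj_pow (card S) (gX f M (x + (\<Sum>i\<in>S. h0 i)))) =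
       (\<Prod>S\<in>Pow {1..Suc s}. conj_pow (card S) (gX f M x))"
    proof (intro prod.cong refl)
      fix S assume "S \<in> Pow {1..Suc s}"
      then have "(\<Sum>i\<in>S. h0 i) = 0" by (intro sum.neutral) (auto simp: h0_def)
      then show "conj_pow (card S) (gX f M (x + (\<Sum>i\<in>S. h0 i))) = conj_pow (card S) (gX f M x)" by simp
    qed
    also have "\<dots> = (if x \<in> {0..<M} then 1 else 0)"
    proof (cases "x \<in> {0..<M}")
      case True
      then show ?thesis using P_unit[of "gX f M x" s] f1 by (simp add: gX_def)
    next
      case False
      then have "gX f M x = 0" by (auto simp: gX_def)
      then have z: "(\<Prod>S\<in>Pow {1..Suc s}. conj_pow (card S) (gX f M x)) = 0"
        by (intro prod_zero bexI[of _ "{}"]) auto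
      show ?thesis unfolding z if_not_P[OF False] ..
    qed
    finally show "(\<Prod>S\<in>Pow {1..Suc s}. conj_pow (card S) (gX f M (x + (\<Sum>i\<in>S. h0 i)))) = (if x \<in> {0..<M} then 1 else 0)" .
  qed
  also have "\<dots> = (\<Sum>x\<in>{0..<M}. 1)"
    by (rule sum.mono_neutral_cong_right) (use M in auto)
  also have "\<dots> = of_int M" using M by simp
  finally have A0: "Aval (Suc s) R (gX f M) h0 = of_int M" .
  have A: "cmod (Aval (Suc s) R (gX f M) h0) = of_int M" unfolding A0 norm_of_int using M by simp
  have "(of_int M)\<^sup>2 \<le> (\<Sum>h\<in>hbox (Suc s) R. (cmod (Aval (Suc s) R (gX f M) h))\<^sup>2)"
    using member_le_sum[OF h0, of "\<lambda>h. (cmod (Aval (Suc s) R (gX f M) h))\<^sup>2"] A by simp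
  also have "\<dots> = cmod (U (Suc (Suc s)) R (gX f M))"
    by (rule cmod_U_Suc[symmetric]) (rule supp_gX[OF M(2)])
  finally show ?thesis .
qed

lemma U_upper:
  assumes f1: "\<And>n. cmod (f n) = 1" and R: "int N \<le> R"
  shows "cmod (U s R (gX f (int N))) \<le> real (card (gowers_Pi s N))"
proof -
  have "cmod (U s R (gX f (int N))) = cmod (\<Sum>n\<in>gowers_Pi s N. \<Prod>S\<in>Pow {1..s}. conj_pow (card S) (f (nat (n 0 + (\<Sum>i\<in>S. n i)))))"
    by (subst link[OF R, symmetric]) (rule refl)
  also have "\<dots> \<le> (\<Sum>n\<in>gowers_Pi s N. cmod (\<Prod>S\<in>Pow {1..s}. conj_pow (card S) (f (nat (n 0 + (\<Sum>i\<in>S. n i))))))"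
    by (rule norm_sum)
  also have "\<dots> = real (card (gowers_Pi s N))"
    by (simp add: prod_norm[symmetric] f1)
  finally show ?thesis .
qed

lemma nrm_translate':
  assumes "supp_in R w" "supp_in R (\<lambda>y. w (y - c))"
  shows "nrm s R (\<lambda>y. w (y - c)) = nrm s R w"
  using nrm_translate[of R w "- c" s] assms by simp

lemma block_decomp:
  fixes f :: "nat \<Rightarrow> complex" and Q N :: nat
  assumes qm: "q_multiplicative q f" and Q: "Q = q ^ k" "Q \<ge> 1"
  defines "A \<equiv> N div Q"
  defines "La \<equiv> (\<lambda>a. if a < A then Q else N mod Q)"
  shows "gX f (int N) y = (\<Sum>a\<in>{0..A}. f (a * Q) * gX f (int (La a)) (y - int (a * Q)))"
proof -
  have bnd: "a * Q + La a \<le> N" if "a \<in> {0..A}" for a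
  proof (cases "a < A")
    case True
    then have "a * Q + Q \<le> A * Q" by (metis Suc_leI mult_Suc mult.commute mult_le_mono1 add.commute)
    also have "\<dots> \<le> N" unfolding A_def by simp
    finally show ?thesis using True unfolding La_def by simp
  next
    case False
    then have "a = A" using that by simp
    then show ?thesis using False unfolding La_def A_def by simp
  qed
  have "N mod Q < Q" using Q(2) by simp
  then have LaQ: "La a \<le> Q" for a unfolding La_def by auto
  have term_nz: "0 \<le> y - int (a * Q) \<and> y - int (a * Q) < int (La a)"
    if "gX f (int (La a)) (y - int (a * Q)) \<noteq> 0" for a
    using that unfolding gX_def by (auto split: if_splits)
  show ?thesis
  proof (cases "0 \<le> y \<and> y < int N")
    case False
    have "(\<Sum>a\<in>{0..A}. f (a * Q) * gX f (int (La a)) (y - int (a * Q))) = 0"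
    proof (intro sum.neutral ballI)
      fix a assume a: "a \<in> {0..A}"
      show "f (a * Q) * gX f (int (La a)) (y - int (a * Q)) = 0"
      proof (rule ccontr)
        assume "f (a * Q) * gX f (int (La a)) (y - int (a * Q)) \<noteq> 0"
        then have "gX f (int (La a)) (y - int (a * Q)) \<noteq> 0" by auto
        then have "0 \<le> y - int (a * Q) \<and> y - int (a * Q) < int (La a)" by (rule term_nz)
        moreover have "int (a * Q) + int (La a) \<le> int N" using bnd[OF a] by linarith
        moreover have "0 \<le> int (a * Q)" by simp
        ultimately show False using False by linarith
      qed
    qed
    then show ?thesis using False unfolding gX_def by auto
  next
    case True
    define m where "m = nat y"
    have ym: "y = int m" using True unfolding m_def by simp
    have mN: "m < N" using True ym by simp
    define a0 where "a0 = m div Q"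
    have a0A: "a0 \<in> {0..A}" unfolding a0_def A_def using mN by (simp add: div_le_mono)
    have mdec: "m = m mod Q + a0 * Q" unfolding a0_def by simp
    have mod_La: "m mod Q < La a0"
    proof (cases "a0 < A")
      case True
      have "m mod Q < Q" using Q(2) by simp
      then show ?thesis unfolding La_def using True by simp
    next
      case False
      then have "a0 = A" using a0A by simp
      then have "m mod Q = m - A * Q" using mdec by simp
      moreover have "N mod Q = N - A * Q" unfolding A_def by (simp add: minus_div_mult_eq_mod)
      moreover have "A * Q \<le> m" using mdec \<open>a0 = A\<close> by (metis le_add2)
      ultimately show ?thesis unfolding La_def using False mN by simp
    qed
    have others: "f (a * Q) * gX f (int (La a)) (y - int (a * Q)) = 0" if "a \<in> {0..A} - {a0}" for a
    proof (rule ccontr)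
      assume "f (a * Q) * gX f (int (La a)) (y - int (a * Q)) \<noteq> 0"
      then have "gX f (int (La a)) (y - int (a * Q)) \<noteq> 0" by auto
      then have c: "0 \<le> y - int (a * Q) \<and> y - int (a * Q) < int (La a)" by (rule term_nz)
      have i1: "int (a * Q) \<le> int m" using c ym by linarith
      have i2: "int m < int (a * Q + La a)" using c ym by simp
      have n1: "a * Q \<le> m" using i1 by (simp only: of_nat_le_iff)
      have n2: "m < a * Q + La a" using i2 by (simp only: of_nat_less_iff)
      have "Q * a \<le> m" "m < Q * Suc a" using n1 n2 LaQ[of a] by (simp_all add: mult.commute)
      then have "m div Q = a" by (rule div_nat_eqI)
      then show False using that unfolding a0_def by simp
    qed
    have "(\<Sum>a\<in>{0..A}. f (a * Q) * gX f (int (La a)) (y - int (a * Q))) =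
      f (a0 * Q) * gX f (int (La a0)) (y - int (a0 * Q))"
  proof -
    have "(\<Sum>a\<in>{0..A} - {a0}. f (a * Q) * gX f (int (La a)) (y - int (a * Q))) = 0"
      by (rule sum.neutral) (use others in blast)
    then show ?thesis using a0A by (subst sum.remove[of _ a0]) auto
  qed
    also have "y - int (a0 * Q) = int (m mod Q)" using mdec ym by linarith
    also have "gX f (int (La a0)) (int (m mod Q)) = f (m mod Q)" unfolding gX_def using mod_La by simp
    also have "f (a0 * Q) * f (m mod Q) = f m"
    proof -
      have "f (m mod Q + a0 * Q) = f (m mod Q) * f (a0 * Q)"
        using qm unfolding q_multiplicative_def
        by (metis Q(1) Q(2) mod_less_divisor dvd_triv_right less_le_trans zero_less_one)
      then show ?thesis using mdec by (metis mult.commute)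
    qed
    also have "f m = gX f (int N) y" unfolding gX_def using True ym by simp
    finally show ?thesis ..
  qed
qed

lemma block_bound:
  fixes f :: "nat \<Rightarrow> complex" and Q N :: nat
  assumes qm: "q_multiplicative q f" and f1: "\<And>n. cmod (f n) = 1" and Q: "Q = q ^ k" "Q \<ge> 1"
    and R: "int N \<le> R"
  shows "nrm (Suc (Suc s)) R (gX f (int N)) \<le>
    (\<Sum>a\<in>{0..N div Q}. nrm (Suc (Suc s)) R (gX f (int (if a < N div Q then Q else N mod Q))))"
proof -
  define A where "A = N div Q"
  define La where "La = (\<lambda>a. if a < A then Q else N mod Q)"
  have dec: "gX f (int N) = (\<lambda>y. \<Sum>a\<in>{0..A}. f (a * Q) * gX f (int (La a)) (y - int (a * Q)))"
    unfolding A_def La_def using block_decomp[OF qm Q] by blast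
  have bnd: "a * Q + La a \<le> N" if "a \<in> {0..A}" for a
  proof (cases "a < A")
    case True
    then have "a * Q + Q \<le> A * Q" by (metis Suc_leI mult_Suc mult.commute mult_le_mono1 add.commute)
    also have "\<dots> \<le> N" unfolding A_def by simp
    finally show ?thesis using True unfolding La_def by simp
  next
    case False
    then have "a = A" using that by simp
    then show ?thesis using False unfolding La_def A_def by simp
  qed
  have supp1: "supp_in R (\<lambda>y. gX f (int (La a)) (y - int (a * Q)))" if "a \<in> {0..A}" for a
    unfolding supp_in_def
  proof (intro allI impI)
    fix y assume "gX f (int (La a)) (y - int (a * Q)) \<noteq> 0"
    then have "0 \<le> y - int (a * Q)" "y - int (a * Q) < int (La a)" unfolding gX_def by (auto split: if_splits)
    moreover have "0 \<le> int (a * Q)" by simp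
    moreover have "int (a * Q) + int (La a) \<le> int N" using bnd[OF that] by linarith
    ultimately show "0 \<le> y \<and> y < R" using R by linarith
  qed
  have supp0: "supp_in R (gX f (int (La a)))" if "a \<in> {0..A}" for a
    using bnd[OF that] R by (intro supp_gX) linarith
  have "nrm (Suc (Suc s)) R (gX f (int N)) \<le> (\<Sum>a\<in>{0..A}. nrm (Suc (Suc s)) R (\<lambda>y. f (a * Q) * gX f (int (La a)) (y - int (a * Q))))"
    unfolding dec
  proof (rule nrm_sum)
    fix j assume "j \<in> {0..A}"
    then show "supp_in R (\<lambda>y. f (j * Q) * gX f (int (La j)) (y - int (j * Q)))"
      by (rule supp_mult_left[OF supp1])
  qed simp
  also have "\<dots> = (\<Sum>a\<in>{0..A}. nrm (Suc (Suc s)) R (gX f (int (La a))))"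
  proof (intro sum.cong refl)
    fix a assume a: "a \<in> {0..A}"
    have "nrm (Suc (Suc s)) R (\<lambda>y. f (a * Q) * gX f (int (La a)) (y - int (a * Q)))
      = cmod (f (a * Q)) * nrm (Suc (Suc s)) R (\<lambda>y. gX f (int (La a)) (y - int (a * Q)))"
      by (rule nrm_scale)
    also have "\<dots> = nrm (Suc (Suc s)) R (gX f (int (La a)))"
      using nrm_translate'[OF supp0[OF a] supp1[OF a]] f1 by simp
    finally show "nrm (Suc (Suc s)) R (\<lambda>y. f (a * Q) * gX f (int (La a)) (y - int (a * Q))) = nrm (Suc (Suc s)) R (gX f (int (La a)))" .
  qed
  finally show ?thesis unfolding A_def La_def .
qed

lemma card_Pi_pos: "N \<ge> 1 \<Longrightarrow> real (card (gowers_Pi s N)) > 0"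
proof -
  assume N: "N \<ge> 1"
  have "0 < (real N / real (Suc s)) ^ Suc s" using N by simp
  also have "\<dots> \<le> real (card (gowers_Pi s N))" by (rule card_Pi_lower[OF N])
  finally show ?thesis .
qed

lemma gn_formula:
  assumes N: "N \<ge> 1" and R: "int N \<le> R"
  shows "gowers_norm s N f = nrm s R (gX f (int N)) / real (card (gowers_Pi s N)) powr (1 / 2 ^ s)"
proof -
  define p where "p = real (card (gowers_Pi s N))"
  have p: "p > 0" unfolding p_def by (rule card_Pi_pos[OF N])
  have gp: "gowers_pow s N f = (1 / of_real p) * U s R (gX f (int N))"
    unfolding gowers_pow_def p_def link[OF R] by simp
  have "cmod (gowers_pow s N f) = cmod (U s R (gX f (int N))) / p"
    unfolding gp using p by (simp add: norm_mult norm_divide)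
  then have "gowers_norm s N f = root (2 ^ s) (cmod (U s R (gX f (int N))) / p)"
    unfolding gowers_norm_def by simp
  also have "\<dots> = (cmod (U s R (gX f (int N))) / p) powr (1 / 2 ^ s)"
    using p by (subst root_powr_inverse) auto
  also have "\<dots> = nrm s R (gX f (int N)) / p powr (1 / 2 ^ s)"
    unfolding nrm_def by (rule powr_divide)
  finally show ?thesis unfolding p_def .
qed

lemma core:
  fixes f :: "nat \<Rightarrow> complex" and N M k :: nat and K R :: int
  assumes qm: "q_multiplicative q f" and f1: "\<And>n. cmod (f n) = 1"
    and q: "q \<ge> 1" and QM: "q ^ k \<le> M" and K: "0 < K" and R: "R = int N + int M"
  shows "nrm (Suc (Suc s)) R (gX f (int N)) \<le> real (N div q ^ k + 1) *
    (sqrt (real M) / sqrt (of_int K) * nrm (Suc (Suc s)) R (gX f (int M)) + (2 * of_int K * real M ^ Suc (Suc s)) powr (1 / 2 ^ Suc (Suc s)))"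
proof -
  define Q where "Q = q ^ k"
  have Q1: "Q \<ge> 1" unfolding Q_def using q by simp
  define bd where "bd = sqrt (real M) / sqrt (of_int K) * nrm (Suc (Suc s)) R (gX f (int M)) + (2 * of_int K * real M ^ Suc (Suc s)) powr (1 / 2 ^ Suc (Suc s))"
  have each: "nrm (Suc (Suc s)) R (gX f (int L)) \<le> bd" if L: "L \<le> M" for L
  proof -
    have "nrm (Suc (Suc s)) R (gX f (int L)) \<le> sqrt (of_int (int L)) / sqrt (of_int K) * nrm (Suc (Suc s)) R (gX f (int M))
      + (2 * of_int K * of_int (int M) ^ Suc (Suc s)) powr (1 / 2 ^ Suc (Suc s))"
      by (rule restriction) (use f1 L K R in auto)
    also have "\<dots> \<le> bd" unfolding bd_def
      using L K by (auto intro!: mult_right_mono divide_right_mono nrm_nonneg)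
    finally show ?thesis .
  qed
  have "nrm (Suc (Suc s)) R (gX f (int N)) \<le> (\<Sum>a\<in>{0..N div Q}. nrm (Suc (Suc s)) R (gX f (int (if a < N div Q then Q else N mod Q))))"
    by (rule block_bound[OF qm f1 Q_def Q1]) (use R in simp)
  also have "\<dots> \<le> (\<Sum>a\<in>{0..N div Q}. bd)"
  proof (rule sum_mono)
    fix a
    have "N mod Q < Q" using Q1 by simp
    then have "(if a < N div Q then Q else N mod Q) \<le> M" using QM unfolding Q_def by auto
    then show "nrm (Suc (Suc s)) R (gX f (int (if a < N div Q then Q else N mod Q))) \<le> bd" by (rule each)
  qed
  also have "\<dots> = real (N div Q + 1) * bd" by simp
  finally show ?thesis unfolding bd_def Q_def .
qed

lemma main_bound:
  fixes f :: "nat \<Rightarrow> complex" and q N M s :: nat and eta :: real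
  assumes s: "s \<ge> 2" and q: "q \<ge> 2" and qm: "q_multiplicative q f" and f1: "\<And>n. cmod (f n) = 1"
    and N: "N \<ge> 1" and M: "M \<ge> 1" and eta: "eta > 0" and h1: "eta * real M < real N" and h2: "real N \<le> real M / eta"
  shows "gowers_norm s N f \<le> ((real q / eta + 1) * (2 * real (Suc s) / eta) ^ Suc s * (2 + 2 ^ Suc s)) * gowers_norm s M f powr (1 / 2 ^ s)"
proof -
  define s' where "s' = s - 2"
  have s': "s = Suc (Suc s')" unfolding s'_def using s by simp
  define lam where "lam = (1::real) / 2 ^ s"
  have lam0: "0 < lam" unfolding lam_def by simp
  have lam2: "lam \<le> 1 / 2"
  proof -
    have "(2::real) ^ 1 \<le> 2 ^ s" by (rule power_increasing) (use s in auto)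
    then have "(2::real) \<le> 2 ^ s" by simp
    then show ?thesis unfolding lam_def by (simp add: divide_le_eq_1 frac_le)
  qed
  define R where "R = int N + int M"
  have NR: "int N \<le> R" and MR: "int M \<le> R" unfolding R_def by auto
  have eta1: "eta < 1"
  proof -
    have "eta * real N \<le> real M" using h2 eta by (simp add: field_simps)
    moreover have "eta * (eta * real M) < eta * real N" using h1 eta by simp
    ultimately have "eta * eta * real M < 1 * real M" by simp
    then have "eta * eta < 1" using M by (simp add: mult_less_cancel_right)
    show ?thesis
    proof (rule ccontr)
      assume "\<not> eta < 1"
      then have "1 * 1 \<le> eta * eta" by (intro mult_mono) auto
      then show False using \<open>eta * eta < 1\<close> by simp
    qed
  qed
  obtain k where k: "q ^ k \<le> M" "M < q ^ (k + 1)" using ex_power_ivl1[OF q, of M] M by auto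
  define Q where "Q = q ^ k"
  have Q1: "Q \<ge> 1" unfolding Q_def using q by simp
  define pN where "pN = real (card (gowers_Pi s N))"
  define pM where "pM = real (card (gowers_Pi s M))"
  have pN0: "pN > 0" unfolding pN_def by (rule card_Pi_pos[OF N])
  have pM0: "pM > 0" unfolding pM_def by (rule card_Pi_pos[OF M])
  define nN where "nN = nrm s R (gX f (int N))"
  define nM where "nM = nrm s R (gX f (int M))"
  define uM where "uM = cmod (U s R (gX f (int M)))"
  define x where "x = gowers_norm s M f"
  have xe: "x = nM / pM powr lam" unfolding x_def nM_def pM_def lam_def by (rule gn_formula[OF M MR])
  have nNe: "gowers_norm s N f = nN / pN powr lam" unfolding nN_def pN_def lam_def by (rule gn_formula[OF N NR])
  have nMu: "nM = uM powr lam" unfolding nM_def uM_def nrm_def lam_def ..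
  have uM_lo: "(real M)\<^sup>2 \<le> uM"
    using U_lower[of f "int M" R s'] f1 MR M unfolding uM_def s' by simp
  have uM_hi: "uM \<le> pM" unfolding uM_def pM_def by (rule U_upper[OF f1 MR])
  define B where "B = 2 ^ s * real M ^ Suc s"
  have pM_hi: "pM \<le> B"
  proof -
    have "pM \<le> real (M * (2 * M) ^ s)" unfolding pM_def by (simp only: of_nat_le_iff card_Pi_upper)
    also have "\<dots> = B" unfolding B_def by (simp add: power_mult_distrib)
    finally show ?thesis .
  qed
  define X where "X = uM / pM"
  have "0 < (real M)\<^sup>2" using M by simp
  then have uM0: "uM > 0" using uM_lo by linarith
  have X0: "X > 0" unfolding X_def using uM0 pM0 by simp
  have X1: "X \<le> 1" unfolding X_def using uM_hi pM0 by simp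
  have xX: "x = X powr lam" unfolding xe nMu X_def by (rule powr_divide[symmetric])
  have x0: "x > 0" unfolding xX using X0 by simp
  have x1: "x \<le> 1" unfolding xX using X0 X1 lam0 by (simp add: powr_le1)
  have xpow: "x ^ (2 ^ s) = X"
  proof -
    have "x powr (real (2 ^ s)) = x ^ (2 ^ s)" by (rule powr_realpow[OF x0])
    then have "x ^ (2 ^ s) = x powr (real (2 ^ s))" by simp
    also have "\<dots> = X powr (lam * 2 ^ s)" unfolding xX powr_powr by simp
    also have "lam * 2 ^ s = 1" unfolding lam_def by simp
    finally show ?thesis using X0 by simp
  qed
  have key: "1 \<le> 2 ^ Suc s * (x * real M)"
  proof (rule ccontr)
    assume "\<not> 1 \<le> 2 ^ Suc s * (x * real M)"
    then have t: "2 ^ Suc s * (x * real M) < 1" by simp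
    define t where "t = x * real M"
    have t0: "0 \<le> t" unfolding t_def using x0 by simp
    have t1: "t \<le> 1"
    proof -
      have "(1::real) \<le> 2 ^ Suc s" by (rule one_le_power) simp
      then have "t \<le> 2 ^ Suc s * t" using t0 by (simp add: mult_le_cancel_right1)
      then show ?thesis using t unfolding t_def by simp
    qed
    have "X \<le> x ^ Suc s'"
    proof -
      have "s < 2 ^ s" by (rule less_exp)
      then have "Suc s' \<le> 2 ^ s" using s' by simp
      then have "x ^ (2 ^ s) \<le> x ^ Suc s'" using x0 x1 by (intro power_decreasing) auto
      then show ?thesis unfolding xpow .
    qed
    have "(real M)\<^sup>2 \<le> X * B"
    proof -
      have "uM = X * pM" unfolding X_def using pM0 by simp
      also have "\<dots> \<le> X * B" using X0 pM_hi by simp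
      finally show ?thesis using uM_lo by simp
    qed
    also have "\<dots> \<le> x ^ Suc s' * B" using \<open>X \<le> x ^ Suc s'\<close> unfolding B_def by (simp add: mult_right_mono)
    also have "\<dots> = 2 ^ s * (real M)\<^sup>2 * t ^ Suc s'"
      unfolding B_def t_def s' by (simp add: power_mult_distrib power2_eq_square)
    also have "\<dots> \<le> 2 ^ s * (real M)\<^sup>2 * t"
    proof -
      have "t ^ Suc s' \<le> t" using power_decreasing[of 1 "Suc s'" t] t0 t1 by simp
      then show ?thesis by (intro mult_left_mono) auto
    qed
    finally have "(real M)\<^sup>2 * 1 \<le> (real M)\<^sup>2 * (2 ^ s * t)" by (simp add: algebra_simps)
    then have "1 \<le> 2 ^ s * t" using M by (simp add: mult_le_cancel_left)
    moreover have "2 ^ s * t < 1 / 2" using t unfolding t_def by simp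
    ultimately show False by simp
  qed
  define K where "K = \<lceil>x * real M\<rceil>"
  have Kge: "x * real M \<le> of_int K" unfolding K_def by simp
  have Kle: "of_int K \<le> x * real M + 1" unfolding K_def by simp
  have K0: "0 < K" using Kge x0 M unfolding K_def by (simp add: zero_less_ceiling)
  have cor: "nN \<le> real (N div Q + 1) * (sqrt (real M) / sqrt (of_int K) * nM + (2 * of_int K * real M ^ s) powr lam)"
    unfolding nN_def nM_def lam_def Q_def s'
    by (rule core[OF qm f1 _ k(1) K0 R_def]) (use q in simp)
  have st2: "sqrt (real M) / sqrt (of_int K) * nM \<le> sqrt x * B powr lam"
  proof -
    have nMx: "nM = x * pM powr lam" unfolding xe using pM0 by simp
    have "sqrt x * sqrt (real M) \<le> sqrt (of_int K)" using Kge by (simp add: real_sqrt_mult[symmetric])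
    then have a: "sqrt (real M) / sqrt (of_int K) \<le> 1 / sqrt x" using x0 K0 M
      by (simp add: divide_simps mult.commute)
    have "sqrt (real M) / sqrt (of_int K) * nM \<le> 1 / sqrt x * (x * pM powr lam)"
      unfolding nMx by (rule mult_right_mono[OF a]) (use x0 in simp)
    also have "\<dots> = (x / sqrt x) * pM powr lam" by simp
    also have "\<dots> = sqrt x * pM powr lam" using x0 by (simp add: real_div_sqrt)
    also have "\<dots> \<le> sqrt x * B powr lam" using pM0 pM_hi lam0 x0 by (intro mult_left_mono powr_mono2) auto
    finally show ?thesis .
  qed
  have st3: "(2 * of_int K * real M ^ s) powr lam \<le> (1 + 2 ^ Suc s) * (x powr lam * B powr lam)"
  proof -
    have "2 * of_int K * real M ^ s \<le> 2 * (x * real M + 1) * real M ^ s"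
      using Kle by (intro mult_right_mono) auto
    also have "\<dots> \<le> 2 * ((1 + 2 ^ Suc s) * (x * real M)) * real M ^ s"
      using key by (intro mult_right_mono mult_left_mono) (auto simp: algebra_simps)
    also have "\<dots> \<le> (1 + 2 ^ Suc s) * x * B"
    proof -
      have "(2::real) ^ 1 \<le> 2 ^ s" by (rule power_increasing) (use s in auto)
      then have "(2::real) \<le> 2 ^ s" by simp
      then have "2 * ((1 + 2 ^ Suc s) * (x * real M)) * real M ^ s \<le> 2 ^ s * ((1 + 2 ^ Suc s) * (x * real M)) * real M ^ s"
        using x0 by (intro mult_right_mono) auto
      then show ?thesis unfolding B_def by (simp add: algebra_simps)
    qed
    finally have le: "2 * of_int K * real M ^ s \<le> (1 + 2 ^ Suc s) * x * B" .
    have "(2 * of_int K * real M ^ s) powr lam \<le> ((1 + 2 ^ Suc s) * x * B) powr lam"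
      using le K0 lam0 by (intro powr_mono2) auto
    also have "\<dots> = (1 + 2 ^ Suc s) powr lam * (x powr lam * B powr lam)" by (simp add: powr_mult)
    also have "(1 + 2 ^ Suc s) powr lam \<le> (1 + 2 ^ Suc s :: real) powr 1"
      using lam2 by (intro powr_mono) auto
    then have "(1 + 2 ^ Suc s) powr lam * (x powr lam * B powr lam) \<le> (1 + 2 ^ Suc s) * (x powr lam * B powr lam)"
      by (intro mult_right_mono) auto
    finally show ?thesis .
  qed
  have sq: "sqrt x \<le> x powr lam"
  proof -
    have "sqrt x = x powr (1/2)" using x0 by (simp add: powr_half_sqrt)
    also have "\<dots> \<le> x powr lam" using lam2 x0 x1 by (intro powr_mono') auto
    finally show ?thesis .
  qed
  define Z where "Z = (2 + 2 ^ Suc s :: real)"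
  have st4: "sqrt (real M) / sqrt (of_int K) * nM + (2 * of_int K * real M ^ s) powr lam \<le> Z * (x powr lam * B powr lam)"
  proof -
    have "sqrt x * B powr lam \<le> x powr lam * B powr lam" using sq by (intro mult_right_mono) auto
    then show ?thesis using st2 st3 unfolding Z_def by (simp add: algebra_simps)
  qed
  define D where "D = (2 * real (Suc s) / eta) ^ Suc s"
  have D1: "D \<ge> 1"
  proof -
    have "1 \<le> 2 * real (Suc s) / eta" using eta eta1 by (simp add: field_simps)
    then show ?thesis unfolding D_def by (rule one_le_power)
  qed
  have BD: "B \<le> D * pN"
  proof -
    have "(eta * real M / real (Suc s)) ^ Suc s \<le> (real N / real (Suc s)) ^ Suc s"
      using h1 eta by (intro power_mono divide_right_mono) auto
    also have "\<dots> \<le> pN" unfolding pN_def by (rule card_Pi_lower[OF N])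
    finally have p: "(eta * real M / real (Suc s)) ^ Suc s \<le> pN" .
    have pr: "(2 * real (Suc s) / eta) * (eta * real M / real (Suc s)) = 2 * real M"
      using eta by (simp add: field_simps del: of_nat_Suc)
    have "D * (eta * real M / real (Suc s)) ^ Suc s = (2 * real M) ^ Suc s"
      unfolding D_def power_mult_distrib[symmetric] pr ..
    also have "\<dots> \<ge> B" unfolding B_def by (simp add: power_mult_distrib)
    finally have "B \<le> D * (eta * real M / real (Suc s)) ^ Suc s" .
    also have "\<dots> \<le> D * pN" using p D1 by (intro mult_left_mono) auto
    finally show ?thesis .
  qed
  have A1: "real (N div Q + 1) \<le> real q / eta + 1"
  proof -
    have "real (N div Q) \<le> real N / real Q" by (rule of_nat_div_le_of_nat)
    also have "\<dots> \<le> real q / eta"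
    proof -
      have "M < q * Q" using k(2) unfolding Q_def by simp
      then have "real M < real q * real Q" by (simp only: of_nat_mult[symmetric] of_nat_less_iff)
      moreover have "eta * real N \<le> real M" using h2 eta by (simp add: field_simps)
      ultimately have "eta * real N \<le> real q * real Q" by simp
      then show ?thesis using eta Q1 by (simp add: field_simps)
    qed
    finally show ?thesis by simp
  qed
  have "gowers_norm s N f = nN / pN powr lam" by (rule nNe)
  also have "\<dots> \<le> real (N div Q + 1) * (Z * (x powr lam * B powr lam)) / pN powr lam"
    using cor st4 pN0 by (intro divide_right_mono) (auto intro: order_trans mult_left_mono)
  also have "\<dots> = real (N div Q + 1) * Z * x powr lam * (B / pN) powr lam"
    by (simp add: powr_divide)
  also have "\<dots> \<le> (real q / eta + 1) * Z * x powr lam * D"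
  proof -
    have "(B / pN) powr lam \<le> D powr lam"
      using BD pN0 lam0 by (intro powr_mono2) (auto simp: divide_le_eq B_def mult.commute)
    also have "\<dots> \<le> D powr 1" using D1 lam2 by (intro powr_mono) auto
    finally have bd: "(B / pN) powr lam \<le> D" using D1 by simp
    have qe: "0 \<le> real q / eta + 1" using eta by simp
    show ?thesis
      by (intro mult_mono A1 bd) (use qe in \<open>auto simp: Z_def\<close>)
  qed
  also have "\<dots> = ((real q / eta + 1) * D * Z) * x powr lam" by (simp add: algebra_simps)
  finally show ?thesis unfolding D_def Z_def x_def lam_def .
qed


theorem lemma2p2:
  fixes q s :: nat
  assumes "q \<ge> 2" and "s \<ge> 2"
  shows "\<exists>lam::real. lam > 0 \<and>
    (\<forall>eta::real. eta > 0 \<longrightarrow> (\<exists>C::real. C > 0 \<and>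
      (\<forall>(f :: nat \<Rightarrow> complex) (N::nat) (M::nat).
         q_multiplicative q f \<longrightarrow> (\<forall>n. cmod (f n) = 1) \<longrightarrow>
         N \<ge> 1 \<longrightarrow> M \<ge> 1 \<longrightarrow> eta * real M < real N \<longrightarrow> real N \<le> real M / eta \<longrightarrow>
         gowers_norm s N f \<le> C * gowers_norm s M f powr lam)))"
proof (rule exI[of _ "1 / 2 ^ s"], intro conjI allI impI)
  show "(0::real) < 1 / 2 ^ s" by simp
  fix eta :: real assume eta: "eta > 0"
  show "\<exists>C::real. C > 0 \<and>
      (\<forall>(f :: nat \<Rightarrow> complex) (N::nat) (M::nat).
         q_multiplicative q f \<longrightarrow> (\<forall>n. cmod (f n) = 1) \<longrightarrow>
         N \<ge> 1 \<longrightarrow> M \<ge> 1 \<longrightarrow> eta * real M < real N \<longrightarrow> real N \<le> real M / eta \<longrightarrow>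
         gowers_norm s N f \<le> C * gowers_norm s M f powr (1 / 2 ^ s))"
  proof (rule exI[of _ "(real q / eta + 1) * (2 * real (Suc s) / eta) ^ Suc s * (2 + 2 ^ Suc s)"], intro conjI allI impI)
    show "0 < (real q / eta + 1) * (2 * real (Suc s) / eta) ^ Suc s * (2 + 2 ^ Suc s)"
      using eta by (intro mult_pos_pos zero_less_power) (auto intro: add_nonneg_pos)
    fix f :: "nat \<Rightarrow> complex" and N M :: nat
    assume qm: "q_multiplicative q f" and f1: "\<forall>n. cmod (f n) = 1" and N: "N \<ge> 1" and M: "M \<ge> 1"
      and h1: "eta * real M < real N" and h2: "real N \<le> real M / eta"
    show "gowers_norm s N f \<le> (real q / eta + 1) * (2 * real (Suc s) / eta) ^ Suc s * (2 + 2 ^ Suc s) * gowers_norm s M f powr (1 / 2 ^ s)"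
      by (rule main_bound[OF assms(2) assms(1) qm _ N M eta h1 h2]) (use f1 in auto)
  qed
qed

end
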